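(* Let $\nu\ge2$, $\rho>0$, and $\lambda_1,\dots,\lambda_\nu>0$, and let $X=(X_1,\dots,X_\nu)^T$ have the truncated normal density $$f(x)=k\prod_{n=1}^{\nu}\lambda_n^{-1/2}\phi(\lambda_n^{-1/2}x_n)\ \text{ if } x^Tx<\rho,\qquad f(x)=0 \text{ otherwise},$$ where $\phi$ is the standard univariate normal density and $k>0$ is the normalizing constant. Then for all $1\le n\ne m\le\nu$, $$\operatorname{cov}(X_n^2,X_m^2)\le 0.$$
   Context: This is the distribution of $X\sim N_\nu(0,\Lambda)$ with $\Lambda=\mathrm{diag}(\lambda_1,\dots,\lambda_\nu)$ truncated to the open Euclidean ball $\{x: x^Tx<\rho\}$. *)

theory Defs
  imports "HOL-Probability.Probability"
begin

definition trunc_normal_unnorm :: "('n::finite \<Rightarrow> real) \<Rightarrow> real \<Rightarrow> real ^ 'n \<Rightarrow> real" where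
  "trunc_normal_unnorm lam rho x =
     (if x \<bullet> x < rho
      then (\<Prod>i\<in>UNIV. lam i powr (-1/2) * std_normal_density (lam i powr (-1/2) * x $ i))
      else 0)"

definition trunc_normal_const :: "('n::finite \<Rightarrow> real) \<Rightarrow> real \<Rightarrow> real" where
  "trunc_normal_const lam rho = 1 / (\<integral>x. trunc_normal_unnorm lam rho x \<partial>lborel)"

definition trunc_normal_density :: "('n::finite \<Rightarrow> real) \<Rightarrow> real \<Rightarrow> real ^ 'n \<Rightarrow> real" where
  "trunc_normal_density lam rho x = trunc_normal_const lam rho * trunc_normal_unnorm lam rho x"

definition cov :: "'a measure \<Rightarrow> ('a \<Rightarrow> real) \<Rightarrow> ('a \<Rightarrow> real) \<Rightarrow> real" where
  "cov M Y Z = (\<integral>\<omega>. (Y \<omega> - (\<integral>\<omega>'. Y \<omega>' \<partial>M)) * (Z \<omega> - (\<integral>\<omega>'. Z \<omega>' \<partial>M)) \<partial>M)"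

end

theory Submission
  imports Defs
begin

lemma layer_cake_c:
  fixes h :: "real \<Rightarrow> real" and c :: real
  assumes hm[measurable]: "h \<in> borel_measurable borel" and hn: "\<And>x. 0 \<le> h x" and c: "0 < c"
  shows "(\<integral>\<^sup>+x. ennreal (h x) \<partial>lborel) =
         ennreal c * (\<integral>\<^sup>+s. indicator {0<..} s * emeasure lborel {x. c * s < h x} \<partial>lborel)"
proof -
  have "(\<integral>\<^sup>+x. ennreal (h x) \<partial>lborel) =
        (\<integral>\<^sup>+x. ennreal c * (\<integral>\<^sup>+s. indicator {(x,s). 0 < s \<and> c * s < h x} (x,s) \<partial>lborel) \<partial>lborel)"
  proof (rule nn_integral_cong)
    fix x
    have "{s. (x,s) \<in> {(x,s). 0 < s \<and> c * s < h x}} = {0<..<h x / c}"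
      using c by (auto simp: field_simps)
    have "(\<integral>\<^sup>+s. indicator {(x,s). 0 < s \<and> c * s < h x} (x,s) \<partial>lborel)
          = (\<integral>\<^sup>+s. indicator {0<..<h x / c} s \<partial>lborel)"
      using c by (intro nn_integral_cong) (auto simp: indicator_def field_simps)
    also have "\<dots> = ennreal (h x / c)"
      using hn[of x] c by simp
    finally show "ennreal (h x) = ennreal c * (\<integral>\<^sup>+s. indicator {(x,s). 0 < s \<and> c * s < h x} (x,s) \<partial>lborel)"
      using c hn[of x] by (simp add: ennreal_mult[symmetric])
  qed
  also have "\<dots> = ennreal c * (\<integral>\<^sup>+x. (\<integral>\<^sup>+s. indicator {(x,s). 0 < s \<and> c * s < h x} (x,s) \<partial>lborel) \<partial>lborel)"
    by (rule nn_integral_cmult) measurable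
  also have "(\<integral>\<^sup>+x. (\<integral>\<^sup>+s. indicator {(x,s). 0 < s \<and> c * s < h x} (x,s) \<partial>lborel) \<partial>lborel)
      = (\<integral>\<^sup>+s. (\<integral>\<^sup>+x. indicator {(x,s). 0 < s \<and> c * s < h x} (x,s) \<partial>lborel) \<partial>lborel)"
    by (rule pair_sigma_finite.Fubini') (auto intro: pair_sigma_finite.intro sigma_finite_lborel)
  also have "\<dots> = (\<integral>\<^sup>+s. indicator {0<..} s * emeasure lborel {x. c * s < h x} \<partial>lborel)"
  proof (rule nn_integral_cong)
    fix s
    show "(\<integral>\<^sup>+x. indicator {(x,s). 0 < s \<and> c * s < h x} (x,s) \<partial>lborel) = indicator {0<..} s * emeasure lborel {x. c * s < h x}"
    proof (cases "0 < s")
      case True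
      then have "(\<integral>\<^sup>+x. indicator {(x,s). 0 < s \<and> c * s < h x} (x,s) \<partial>lborel) = (\<integral>\<^sup>+x. indicator {x. c * s < h x} x \<partial>lborel)"
        by (intro nn_integral_cong) (auto simp: indicator_def)
      also have "\<dots> = emeasure lborel {x. c * s < h x}"
        by (rule nn_integral_indicator) measurable
      finally show ?thesis using True by simp
    qed (simp add: indicator_def)
  qed
  finally show ?thesis .
qed

definition lc :: "(real \<Rightarrow> real) \<Rightarrow> bool" where
  "lc f \<longleftrightarrow> (\<forall>x y t. 0 < t \<longrightarrow> t < 1 \<longrightarrow> f x powr t * f y powr (1 - t) \<le> f (t * x + (1 - t) * y))"

lemma powr_prod_strict:
  fixes v w x y t :: real
  assumes "0 < v" "v < x" "0 < w" "w < y" "0 < t" "t < 1"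
  shows "v powr t * w powr (1 - t) < x powr t * y powr (1 - t)"
proof -
  have "v powr t < x powr t" using assms by (intro powr_less_mono2) auto
  moreover have "w powr (1-t) < y powr (1-t)" using assms by (intro powr_less_mono2) auto
  ultimately show ?thesis using assms by (intro mult_strict_mono) auto
qed

lemma lc_level_convex:
  assumes "lc f" "\<And>x. 0 \<le> f x" "0 < v" "a1 \<le> a" "a \<le> a2" "v < f a1" "v < f a2"
  shows "v < f a"
proof (cases "a = a1 \<or> a = a2")
  case True then show ?thesis using assms by auto
next
  case False
  then have lt: "a1 < a" "a < a2" using assms by auto
  define t where "t = (a2 - a) / (a2 - a1)"
  have t: "0 < t" "t < 1" using lt by (auto simp: t_def field_simps)
  have "t * (a2 - a1) = a2 - a" using lt by (simp add: t_def)
  then have a: "a = t * a1 + (1 - t) * a2" by (simp add: algebra_simps)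
  have "v = v powr t * v powr (1 - t)" using assms by (simp add: powr_add[symmetric])
  also have "\<dots> < f a1 powr t * f a2 powr (1 - t)"
    using assms t by (intro powr_prod_strict) auto
  also have "\<dots> \<le> f a" using assms(1) t unfolding lc_def a by blast
  finally show ?thesis .
qed

lemma interval_in_level:
  fixes f g h :: "real \<Rightarrow> real"
  assumes lcf: "lc f" and lcg: "lc g" and fn: "\<And>x. 0 \<le> f x" and gn: "\<And>x. 0 \<le> g x"
    and th: "0 < \<theta>" "\<theta> < 1"
    and key: "\<And>x y. f x powr \<theta> * g y powr (1 - \<theta>) \<le> h (\<theta> * x + (1 - \<theta>) * y)"
    and vf: "0 < vf" and vg: "0 < vg"
    and a: "a1 \<le> a2" "vf < f a1" "vf < f a2"
    and b: "b1 \<le> b2" "vg < g b1" "vg < g b2"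
  shows "{\<theta> * a1 + (1 - \<theta>) * b1 .. \<theta> * a2 + (1 - \<theta>) * b2} \<subseteq> {z. vf powr \<theta> * vg powr (1 - \<theta>) < h z}"
proof
  fix z assume z: "z \<in> {\<theta> * a1 + (1 - \<theta>) * b1 .. \<theta> * a2 + (1 - \<theta>) * b2}"
  define L where "L = \<theta> * a1 + (1 - \<theta>) * b1"
  define R where "R = \<theta> * a2 + (1 - \<theta>) * b2"
  have LR: "L \<le> z" "z \<le> R" using z by (auto simp: L_def R_def)
  obtain \<tau> where tau: "0 \<le> \<tau>" "\<tau> \<le> 1" "z = L + \<tau> * (R - L)"
  proof (cases "R = L")
    case True then show ?thesis using that[of 0] LR by auto
  next
    case False then have "L < R" using LR by auto
    then show ?thesis using that[of "(z - L) / (R - L)"] LR by (auto simp: field_simps)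
  qed
  define a where "a = a1 + \<tau> * (a2 - a1)"
  define b where "b = b1 + \<tau> * (b2 - b1)"
  have "\<tau> * (a2 - a1) \<le> 1 * (a2 - a1)" using tau a(1) by (intro mult_right_mono) auto
  then have "a1 \<le> a" "a \<le> a2" using tau a(1) by (auto simp: a_def)
  then have fa: "vf < f a" using lc_level_convex[OF lcf fn vf _ _ a(2,3)] by auto
  have "\<tau> * (b2 - b1) \<le> 1 * (b2 - b1)" using tau b(1) by (intro mult_right_mono) auto
  then have "b1 \<le> b" "b \<le> b2" using tau b(1) by (auto simp: b_def)
  then have gb: "vg < g b" using lc_level_convex[OF lcg gn vg _ _ b(2,3)] by auto
  have zab: "z = \<theta> * a + (1 - \<theta>) * b" using tau(3) by (simp add: a_def b_def L_def R_def algebra_simps)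
  have "vf powr \<theta> * vg powr (1 - \<theta>) < f a powr \<theta> * g b powr (1 - \<theta>)"
    using vf vg fa gb th by (intro powr_prod_strict) auto
  also have "\<dots> \<le> h z" using key[of a b] zab by simp
  finally show "z \<in> {z. vf powr \<theta> * vg powr (1 - \<theta>) < h z}" by simp
qed

lemma diam_bound:
  fixes A :: "real set"
  assumes "A \<noteq> {}" "\<And>a1 a2. a1 \<in> A \<Longrightarrow> a2 \<in> A \<Longrightarrow> a2 - a1 \<le> D"
  shows "bdd_above A" "bdd_below A" "Sup A - Inf A \<le> D"
proof -
  obtain a0 where a0: "a0 \<in> A" using assms by auto
  have "x \<le> a0 + D" if "x \<in> A" for x using assms(2)[of a0 x] a0 that by simp
  then show ba: "bdd_above A" by (rule bdd_aboveI)
  have "a0 - D \<le> x" if "x \<in> A" for x using assms(2)[of x a0] a0 that by simp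
  then show bb: "bdd_below A" by (rule bdd_belowI)
  have "\<forall>a1\<in>A. Sup A - D \<le> a1"
  proof
    fix a1 assume "a1 \<in> A"
    have "x \<le> a1 + D" if "x \<in> A" for x using assms(2)[of a1 x] \<open>a1 \<in> A\<close> that by simp
    then have "Sup A \<le> a1 + D" using assms(1) by (intro cSup_least) auto
    then show "Sup A - D \<le> a1" by simp
  qed
  then have "Sup A - D \<le> Inf A" using assms(1) by (intro cInf_greatest) auto
  then show "Sup A - Inf A \<le> D" by simp
qed

lemma emeasure_le_diam:
  fixes A :: "real set"
  assumes "A \<noteq> {}" "bdd_above A" "bdd_below A" "A \<in> sets lborel"
  shows "emeasure lborel A \<le> ennreal (Sup A - Inf A)"
proof -
  have "A \<subseteq> {Inf A .. Sup A}" using assms by (auto intro: cInf_lower cSup_upper)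
  then have "emeasure lborel A \<le> emeasure lborel {Inf A .. Sup A}" by (intro emeasure_mono) auto
  also have "\<dots> = ennreal (Sup A - Inf A)" using assms by (simp add: emeasure_lborel_Icc_eq cInf_le_cSup)
  finally show ?thesis .
qed

lemma BM_aux:
  fixes A B E :: "real set"
  assumes A: "A \<noteq> {}" "A \<in> sets lborel" and B: "B \<noteq> {}" "B \<in> sets lborel"
    and th: "0 < \<theta>" "\<theta> < 1"
    and H: "\<And>a1 a2 b1 b2. a1 \<in> A \<Longrightarrow> a2 \<in> A \<Longrightarrow> b1 \<in> B \<Longrightarrow> b2 \<in> B \<Longrightarrow> a1 \<le> a2 \<Longrightarrow> b1 \<le> b2 \<Longrightarrow>
          ennreal (\<theta> * (a2 - a1) + (1 - \<theta>) * (b2 - b1)) \<le> emeasure lborel E"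
  shows "ennreal \<theta> * emeasure lborel A + ennreal (1 - \<theta>) * emeasure lborel B \<le> emeasure lborel E"
proof (cases "emeasure lborel E = \<infinity>")
  case True then show ?thesis by simp
next
  case False
  define e where "e = enn2real (emeasure lborel E)"
  have Ee: "emeasure lborel E = ennreal e" using False by (simp add: e_def ennreal_enn2real_if)
  have e0: "0 \<le> e" by (simp add: e_def)
  have H': "\<theta> * (a2 - a1) + (1 - \<theta>) * (b2 - b1) \<le> e"
    if "a1 \<in> A" "a2 \<in> A" "b1 \<in> B" "b2 \<in> B" "a1 \<le> a2" "b1 \<le> b2" for a1 a2 b1 b2
  proof -
    have "\<theta> * (a2 - a1) + (1 - \<theta>) * (b2 - b1) \<ge> 0" using that th by auto
    then show ?thesis using H[OF that] e0 Ee by (simp add: ennreal_le_iff)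
  qed
  have H2: "\<theta> * (a2 - a1) + (1 - \<theta>) * (b2 - b1) \<le> e"
    if "a1 \<in> A" "a2 \<in> A" "b1 \<in> B" "b2 \<in> B" "b1 \<le> b2" for a1 a2 b1 b2
  proof (cases "a1 \<le> a2")
    case True then show ?thesis using H' that by auto
  next
    case False
    then have "\<theta> * (a2 - a1) + (1 - \<theta>) * (b2 - b1) \<le> \<theta> * (a2 - a2) + (1 - \<theta>) * (b2 - b1)"
      using th False by (simp add: mult_nonneg_nonpos)
    also have "\<dots> \<le> e" using H'[of a2 a2 b1 b2] that by auto
    finally show ?thesis .
  qed
  obtain b0 where b0: "b0 \<in> B" using B by auto
  define dA where "dA = Sup A - Inf A"
  have dA: "bdd_above A" "bdd_below A" "dA \<le> (e - (1 - \<theta>) * (b2 - b1)) / \<theta>"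
    if "b1 \<in> B" "b2 \<in> B" "b1 \<le> b2" for b1 b2
  proof -
    have "a2 - a1 \<le> (e - (1 - \<theta>) * (b2 - b1)) / \<theta>" if "a1 \<in> A" "a2 \<in> A" for a1 a2
      using H2[OF that \<open>b1 \<in> B\<close> \<open>b2 \<in> B\<close> \<open>b1 \<le> b2\<close>] th by (simp add: field_simps)
    from diam_bound[OF A(1) this] show "bdd_above A" "bdd_below A" "dA \<le> (e - (1 - \<theta>) * (b2 - b1)) / \<theta>"
      by (auto simp: dA_def)
  qed
  have bA: "bdd_above A" "bdd_below A" using dA[OF b0 b0] by auto
  have dA0: "0 \<le> dA" using A(1) bA unfolding dA_def by (metis cInf_le_cSup diff_ge_0_iff_ge)
  have dA': "\<theta> * dA \<le> e" using dA(3)[OF b0 b0] th by (simp add: field_simps)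
  define dB where "dB = Sup B - Inf B"
  have "b2 - b1 \<le> (e - \<theta> * dA) / (1 - \<theta>)" if "b1 \<in> B" "b2 \<in> B" for b1 b2
  proof (cases "b1 \<le> b2")
    case True
    then show ?thesis using dA(3)[OF that True] th by (simp add: field_simps)
  next
    case False
    then have "b2 - b1 \<le> 0" by simp
    also have "0 \<le> (e - \<theta> * dA) / (1 - \<theta>)" using dA' th by simp
    finally show ?thesis .
  qed
  from diam_bound[OF B(1) this] have bB: "bdd_above B" "bdd_below B" "dB \<le> (e - \<theta> * dA) / (1 - \<theta>)"
    by (auto simp: dB_def)
  have dB0: "0 \<le> dB" using B(1) bB unfolding dB_def by (metis cInf_le_cSup diff_ge_0_iff_ge)
  have sum: "\<theta> * dA + (1 - \<theta>) * dB \<le> e" using bB(3) th by (simp add: field_simps)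
  have "ennreal \<theta> * emeasure lborel A + ennreal (1 - \<theta>) * emeasure lborel B
      \<le> ennreal \<theta> * ennreal dA + ennreal (1 - \<theta>) * ennreal dB"
    using emeasure_le_diam[OF A(1) bA A(2)] emeasure_le_diam[OF B(1) bB(1,2) B(2)]
    by (intro add_mono mult_left_mono) (auto simp: dA_def dB_def)
  also have "\<dots> = ennreal (\<theta> * dA + (1 - \<theta>) * dB)"
    using th dA0 dB0 by (simp add: ennreal_mult ennreal_plus)
  also have "\<dots> \<le> ennreal e" using sum by (rule ennreal_leI)
  finally show ?thesis using Ee by simp
qed

lemma level_meas[measurable]:
  fixes f :: "real \<Rightarrow> real"
  assumes [measurable]: "f \<in> borel_measurable borel"
  shows "(\<lambda>s. emeasure lborel {x. c * s < f x}) \<in> borel_measurable borel"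
proof -
  have 1: "(\<lambda>p::real\<times>real. c * fst p) \<in> borel_measurable (borel \<Otimes>\<^sub>M lborel)"
    by (intro borel_measurable_times measurable_const measurable_fst'' measurable_ident_sets) auto
  have 2: "(\<lambda>p::real\<times>real. f (snd p)) \<in> borel_measurable (borel \<Otimes>\<^sub>M lborel)"
    by (rule measurable_compose[OF measurable_snd]) simp
  have Q: "{p::real\<times>real. c * fst p < f (snd p)} \<in> sets (borel \<Otimes>\<^sub>M lborel)"
    using borel_measurable_less[OF 1 2] by (simp add: space_pair_measure)
  have "(\<lambda>s. emeasure lborel (Pair s -` {p::real\<times>real. c * fst p < f (snd p)})) \<in> borel_measurable borel"
    by (rule sigma_finite_measure.measurable_emeasure_Pair[OF sigma_finite_lborel Q])
  then show ?thesis by (simp add: vimage_def)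
qed

lemma level_integral:
  fixes f :: "real \<Rightarrow> real"
  assumes fm[measurable]: "f \<in> borel_measurable borel" and fn: "\<And>x. 0 \<le> f x"
    and Mf: "0 < Mf" "\<And>x. f x \<le> Mf"
    and fin: "(\<integral>\<^sup>+x. ennreal (f x) \<partial>lborel) = ennreal I" and I0: "0 \<le> I"
  shows "(\<integral>\<^sup>+s. indicator {0<..<1} s * emeasure lborel {x. Mf * s < f x} \<partial>lborel) = ennreal (I / Mf)"
proof -
  have "(\<integral>\<^sup>+s. indicator {0<..<1} s * emeasure lborel {x. Mf * s < f x} \<partial>lborel)
      = (\<integral>\<^sup>+s. indicator {0<..} s * emeasure lborel {x. Mf * s < f x} \<partial>lborel)"
  proof (rule nn_integral_cong)
    fix s show "indicator {0<..<1} s * emeasure lborel {x. Mf * s < f x} = indicator {0<..} s * emeasure lborel {x. Mf * s < f x}"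
    proof (cases "1 \<le> s")
      case True
      have "Mf * 1 \<le> Mf * s" using Mf(1) True by (intro mult_left_mono) auto
      then have "{x. Mf * s < f x} = {}" using Mf(2) by (auto simp: not_less intro: order.trans)
      then show ?thesis by simp
    qed (auto simp: indicator_def)
  qed
  moreover have "ennreal I = ennreal Mf * (\<integral>\<^sup>+s. indicator {0<..} s * emeasure lborel {x. Mf * s < f x} \<partial>lborel)"
    using layer_cake_c[OF fm fn Mf(1)] fin by simp
  ultimately show ?thesis using Mf(1) I0
    by (simp add: divide_ennreal[symmetric] ennreal_mult_divide_eq mult.commute[of "ennreal Mf"])
qed

lemma sup_range_facts:
  fixes f :: "real \<Rightarrow> real"
  assumes "bdd_above (range f)"
  shows "\<And>x. f x \<le> Sup (range f)" "\<And>v. v < Sup (range f) \<Longrightarrow> \<exists>x. v < f x"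
  using assms by (auto intro: cSup_upper simp: less_cSup_iff)

lemma prekopa_leindler:
  fixes f g h :: "real \<Rightarrow> real"
  assumes fm[measurable]: "f \<in> borel_measurable borel" and gm[measurable]: "g \<in> borel_measurable borel"
    and hm[measurable]: "h \<in> borel_measurable borel"
    and fn: "\<And>x. 0 \<le> f x" and gn: "\<And>x. 0 \<le> g x" and hn: "\<And>x. 0 \<le> h x"
    and bf: "bdd_above (range f)" and bg: "bdd_above (range g)"
    and lcf: "lc f" and lcg: "lc g" and th: "0 < \<theta>" "\<theta> < 1"
    and key: "\<And>x y. f x powr \<theta> * g y powr (1 - \<theta>) \<le> h (\<theta> * x + (1 - \<theta>) * y)"
    and finf: "(\<integral>\<^sup>+x. ennreal (f x) \<partial>lborel) < \<infinity>" and fing: "(\<integral>\<^sup>+x. ennreal (g x) \<partial>lborel) < \<infinity>"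
  shows "ennreal (enn2real (\<integral>\<^sup>+x. ennreal (f x) \<partial>lborel) powr \<theta> * enn2real (\<integral>\<^sup>+x. ennreal (g x) \<partial>lborel) powr (1 - \<theta>))
           \<le> (\<integral>\<^sup>+x. ennreal (h x) \<partial>lborel)"
proof -
  define If where "If = enn2real (\<integral>\<^sup>+x. ennreal (f x) \<partial>lborel)"
  define Ig where "Ig = enn2real (\<integral>\<^sup>+x. ennreal (g x) \<partial>lborel)"
  have If: "(\<integral>\<^sup>+x. ennreal (f x) \<partial>lborel) = ennreal If" "0 \<le> If"
    using finf by (auto simp: If_def ennreal_enn2real_if)
  have Ig: "(\<integral>\<^sup>+x. ennreal (g x) \<partial>lborel) = ennreal Ig" "0 \<le> Ig"
    using fing by (auto simp: Ig_def ennreal_enn2real_if)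
  define Mf where "Mf = Sup (range f)"
  define Mg where "Mg = Sup (range g)"
  note sf = sup_range_facts[OF bf, folded Mf_def]
  note sg = sup_range_facts[OF bg, folded Mg_def]
  show ?thesis
  proof (cases "Mf = 0 \<or> Mg = 0")
    case True
    then have "If = 0 \<or> Ig = 0"
    proof
      assume "Mf = 0"
      then have "\<And>x. f x = 0" using sf(1) fn by (metis order.antisym)
      then show ?thesis using If by simp
    next
      assume "Mg = 0"
      then have "\<And>x. g x = 0" using sg(1) gn by (metis order.antisym)
      then show ?thesis using Ig by simp
    qed
    then show ?thesis using th by (auto simp: If_def[symmetric] Ig_def[symmetric])
  next
    case False
    have Mf0: "0 < Mf" using False fn[of 0] sf(1)[of 0] by linarith
    have Mg0: "0 < Mg" using False gn[of 0] sg(1)[of 0] by linarith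
    define c where "c = Mf powr \<theta> * Mg powr (1 - \<theta>)"
    have c0: "0 < c" using Mf0 Mg0 by (simp add: c_def)
    have level: "ennreal \<theta> * emeasure lborel {x. Mf * s < f x} + ennreal (1 - \<theta>) * emeasure lborel {x. Mg * s < g x}
        \<le> emeasure lborel {x. c * s < h x}" if s: "0 < s" "s < 1" for s
    proof (rule BM_aux)
      show "{x. Mf * s < f x} \<noteq> {}" using sf(2)[of "Mf * s"] Mf0 s by auto
      show "{x. Mg * s < g x} \<noteq> {}" using sg(2)[of "Mg * s"] Mg0 s by auto
      show "{x. Mf * s < f x} \<in> sets lborel" "{x. Mg * s < g x} \<in> sets lborel" by measurable
      show "0 < \<theta>" "\<theta> < 1" by (rule th)+
      fix a1 a2 b1 b2 assume a: "a1 \<in> {x. Mf * s < f x}" "a2 \<in> {x. Mf * s < f x}"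
        and b: "b1 \<in> {x. Mg * s < g x}" "b2 \<in> {x. Mg * s < g x}" and le: "a1 \<le> a2" "b1 \<le> b2"
      have cs: "(Mf * s) powr \<theta> * (Mg * s) powr (1 - \<theta>) = c * s"
        using Mf0 Mg0 s by (simp add: c_def powr_mult powr_add[symmetric])
      have sub: "{\<theta> * a1 + (1 - \<theta>) * b1 .. \<theta> * a2 + (1 - \<theta>) * b2} \<subseteq> {x. c * s < h x}"
        using interval_in_level[OF lcf lcg fn gn th key, of "Mf * s" "Mg * s" a1 a2 b1 b2] a b le Mf0 Mg0 s cs
        by auto
      have "ennreal (\<theta> * (a2 - a1) + (1 - \<theta>) * (b2 - b1)) = emeasure lborel {\<theta> * a1 + (1 - \<theta>) * b1 .. \<theta> * a2 + (1 - \<theta>) * b2}"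
      proof -
        have "\<theta> * a1 + (1 - \<theta>) * b1 \<le> \<theta> * a2 + (1 - \<theta>) * b2"
          using le th by (intro add_mono mult_left_mono) auto
        then show ?thesis by (simp add: algebra_simps)
      qed
      also have "\<dots> \<le> emeasure lborel {x. c * s < h x}"
      proof (rule emeasure_mono[OF sub])
        show "{x. c * s < h x} \<in> sets lborel" by measurable
      qed
      finally show "ennreal (\<theta> * (a2 - a1) + (1 - \<theta>) * (b2 - b1)) \<le> emeasure lborel {x. c * s < h x}" .
    qed
    have "(\<integral>\<^sup>+x. ennreal (h x) \<partial>lborel) = ennreal c * (\<integral>\<^sup>+s. indicator {0<..} s * emeasure lborel {x. c * s < h x} \<partial>lborel)"
      by (rule layer_cake_c[OF hm hn c0])
    also have "\<dots> \<ge> ennreal c * (\<integral>\<^sup>+s. ennreal \<theta> * (indicator {0<..<1} s * emeasure lborel {x. Mf * s < f x})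
           + ennreal (1 - \<theta>) * (indicator {0<..<1} s * emeasure lborel {x. Mg * s < g x}) \<partial>lborel)"
    proof (intro mult_left_mono nn_integral_mono)
      fix s
      show "ennreal \<theta> * (indicator {0<..<1} s * emeasure lborel {x. Mf * s < f x})
           + ennreal (1 - \<theta>) * (indicator {0<..<1} s * emeasure lborel {x. Mg * s < g x})
          \<le> indicator {0<..} s * emeasure lborel {x. c * s < h x}"
        using level[of s] by (cases "0 < s \<and> s < 1") (auto simp: indicator_def)
    qed simp
    also have "(\<integral>\<^sup>+s. ennreal \<theta> * (indicator {0<..<1} s * emeasure lborel {x. Mf * s < f x})
           + ennreal (1 - \<theta>) * (indicator {0<..<1} s * emeasure lborel {x. Mg * s < g x}) \<partial>lborel)
        = ennreal \<theta> * (\<integral>\<^sup>+s. indicator {0<..<1} s * emeasure lborel {x. Mf * s < f x} \<partial>lborel)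
          + ennreal (1 - \<theta>) * (\<integral>\<^sup>+s. indicator {0<..<1} s * emeasure lborel {x. Mg * s < g x} \<partial>lborel)"
    proof -
      have [measurable]: "(\<lambda>s. emeasure lborel {x. Mf * s < f x}) \<in> borel_measurable borel"
         "(\<lambda>s. emeasure lborel {x. Mg * s < g x}) \<in> borel_measurable borel"
        by (rule level_meas[OF fm], rule level_meas[OF gm])
      show ?thesis by (subst nn_integral_add) (auto simp: nn_integral_cmult)
    qed
    also have "\<dots> = ennreal \<theta> * ennreal (If / Mf) + ennreal (1 - \<theta>) * ennreal (Ig / Mg)"
      using level_integral[OF fm fn Mf0 sf(1) If] level_integral[OF gm gn Mg0 sg(1) Ig] by simp
    also have "ennreal c * \<dots> = ennreal (c * (\<theta> * (If / Mf) + (1 - \<theta>) * (Ig / Mg)))"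
    proof -
      have n1: "0 \<le> \<theta> * (If / Mf)" "0 \<le> (1 - \<theta>) * (Ig / Mg)" using th If Ig Mf0 Mg0 by auto
      have "ennreal \<theta> * ennreal (If / Mf) + ennreal (1 - \<theta>) * ennreal (Ig / Mg)
          = ennreal (\<theta> * (If / Mf) + (1 - \<theta>) * (Ig / Mg))"
      proof -
        have "ennreal \<theta> * ennreal (If / Mf) = ennreal (\<theta> * (If / Mf))" using th If Mf0 by (subst ennreal_mult) auto
        moreover have "ennreal (1 - \<theta>) * ennreal (Ig / Mg) = ennreal ((1 - \<theta>) * (Ig / Mg))" using th Ig Mg0 by (subst ennreal_mult) auto
        ultimately show ?thesis using ennreal_plus[OF n1] by simp
      qed
      then show ?thesis using c0 n1 by (subst ennreal_mult) auto
    qed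
    finally have main: "ennreal (c * (\<theta> * (If / Mf) + (1 - \<theta>) * (Ig / Mg))) \<le> (\<integral>\<^sup>+x. ennreal (h x) \<partial>lborel)" .
    have amgm: "If powr \<theta> * Ig powr (1 - \<theta>) \<le> c * (\<theta> * (If / Mf) + (1 - \<theta>) * (Ig / Mg))"
    proof (cases "If = 0 \<or> Ig = 0")
      case True
      then have z: "If powr \<theta> * Ig powr (1 - \<theta>) = 0" by auto
      have "0 \<le> c * (\<theta> * (If / Mf) + (1 - \<theta>) * (Ig / Mg))"
        using c0 th If Ig Mf0 Mg0 by (intro mult_nonneg_nonneg add_nonneg_nonneg) auto
      then show ?thesis using z by linarith
    next
      case False
      then have p: "0 < If / Mf" "0 < Ig / Mg" using If Ig Mf0 Mg0 by auto
      have "If powr \<theta> * Ig powr (1 - \<theta>) = c * ((If / Mf) powr \<theta> * (Ig / Mg) powr (1 - \<theta>))"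
        using If Ig Mf0 Mg0 by (simp add: c_def powr_divide field_simps)
      also have "\<dots> \<le> c * (\<theta> * (If / Mf) + (1 - \<theta>) * (Ig / Mg))"
        using Youngs_inequality_0[of \<theta> "1 - \<theta>" "If / Mf" "Ig / Mg"] p th c0
        by (intro mult_left_mono) auto
      finally show ?thesis .
    qed
    show ?thesis using order.trans[OF ennreal_leI[OF amgm] main] by (simp add: If_def Ig_def)
  qed
qed

lemma prekopa:
  fixes F :: "real \<Rightarrow> real \<Rightarrow> real"
  assumes meas[measurable]: "\<And>t. F t \<in> borel_measurable borel"
    and nonneg: "\<And>t y. 0 \<le> F t y"
    and bdd: "\<And>t. bdd_above (range (F t))"
    and fin: "\<And>t. (\<integral>\<^sup>+y. ennreal (F t y) \<partial>lborel) < \<infinity>"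
    and jlc: "\<And>t1 t2 y1 y2 \<theta>. 0 < \<theta> \<Longrightarrow> \<theta> < 1 \<Longrightarrow>
      F t1 y1 powr \<theta> * F t2 y2 powr (1 - \<theta>) \<le> F (\<theta> * t1 + (1 - \<theta>) * t2) (\<theta> * y1 + (1 - \<theta>) * y2)"
  shows "lc (\<lambda>t. enn2real (\<integral>\<^sup>+y. ennreal (F t y) \<partial>lborel))"
  unfolding lc_def
proof (intro allI impI)
  fix x y \<theta> :: real assume th: "0 < \<theta>" "\<theta> < 1"
  have lcF: "lc (F t)" for t
    unfolding lc_def
  proof (intro allI impI)
    fix a b \<theta>' :: real assume "0 < \<theta>'" "\<theta>' < 1"
    then have "F t a powr \<theta>' * F t b powr (1 - \<theta>') \<le> F (\<theta>' * t + (1 - \<theta>') * t) (\<theta>' * a + (1 - \<theta>') * b)"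
      by (rule jlc)
    moreover have "\<theta>' * t + (1 - \<theta>') * t = t" by (simp add: algebra_simps)
    ultimately show "F t a powr \<theta>' * F t b powr (1 - \<theta>') \<le> F t (\<theta>' * a + (1 - \<theta>') * b)" by simp
  qed
  have "ennreal (enn2real (\<integral>\<^sup>+y. ennreal (F x y) \<partial>lborel) powr \<theta> * enn2real (\<integral>\<^sup>+z. ennreal (F y z) \<partial>lborel) powr (1 - \<theta>))
     \<le> (\<integral>\<^sup>+z. ennreal (F (\<theta> * x + (1 - \<theta>) * y) z) \<partial>lborel)"
    by (rule prekopa_leindler[OF meas meas meas nonneg nonneg nonneg bdd bdd lcF lcF th _ fin fin])
       (rule jlc[OF th])
  also have "\<dots> = ennreal (enn2real (\<integral>\<^sup>+z. ennreal (F (\<theta> * x + (1 - \<theta>) * y) z) \<partial>lborel))"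
  proof -
    have "(\<integral>\<^sup>+z. ennreal (F (\<theta> * x + (1 - \<theta>) * y) z) \<partial>lborel) \<noteq> \<top>"
      using fin[of "\<theta> * x + (1 - \<theta>) * y"] by simp
    then show ?thesis by (simp add: ennreal_enn2real_if)
  qed
  finally show "enn2real (\<integral>\<^sup>+y. ennreal (F x y) \<partial>lborel) powr \<theta> * enn2real (\<integral>\<^sup>+z. ennreal (F y z) \<partial>lborel) powr (1 - \<theta>)
     \<le> enn2real (\<integral>\<^sup>+z. ennreal (F (\<theta> * x + (1 - \<theta>) * y) z) \<partial>lborel)"
    by (simp add: ennreal_le_iff)
qed

definition gd :: "real \<Rightarrow> real \<Rightarrow> real" where
  "gd l w = l powr (-1/2) * std_normal_density (l powr (-1/2) * w)"

lemma gd_nonneg: "0 < l \<Longrightarrow> 0 \<le> gd l w"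
  by (simp add: gd_def)

lemma gd_meas[measurable]: "gd l \<in> borel_measurable borel"
  unfolding gd_def[abs_def] by measurable

lemma gd_le: "0 < l \<Longrightarrow> gd l w \<le> l powr (-1/2)"
proof -
  assume l: "0 < l"
  have "std_normal_density v \<le> 1" for v
  proof -
    have "exp (- v\<^sup>2 / 2) \<le> 1" by simp
    moreover have "1 \<le> sqrt (2 * pi)" using pi_gt3 by (simp add: real_le_rsqrt)
    moreover have "1 / sqrt (2 * pi * 1\<^sup>2) \<le> 1" using \<open>1 \<le> sqrt (2 * pi)\<close> by simp
    ultimately show ?thesis unfolding normal_density_def by (intro mult_le_one) auto
  qed
  then show ?thesis using l unfolding gd_def by (intro mult_left_le) auto
qed

lemma gd_normal: "0 < l \<Longrightarrow> gd l w = normal_density 0 (sqrt l) w"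
proof -
  assume l: "0 < l"
  have a: "l powr (-1/2) = 1 / sqrt l" using l by (simp add: powr_minus_divide powr_half_sqrt)
  show ?thesis using l unfolding gd_def normal_density_def a
    by (simp add: power_divide real_sqrt_mult field_simps)
qed

lemma gd_integral: "0 < l \<Longrightarrow> (\<integral>\<^sup>+w. ennreal (gd l w) \<partial>lborel) = 1"
proof -
  assume l: "0 < l"
  interpret prob_space "density lborel (\<lambda>x. ennreal (normal_density 0 (sqrt l) x))"
    using l by (intro prob_space_normal_density) auto
  have "emeasure (density lborel (\<lambda>x. ennreal (normal_density 0 (sqrt l) x))) UNIV = 1"
    using emeasure_space_1 by simp
  then show ?thesis using l by (simp add: emeasure_density gd_normal)
qed

lemma gd_lc:
  assumes l: "0 < l" and th: "0 < \<theta>" "\<theta> < 1"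
  shows "gd l x powr \<theta> * gd l y powr (1 - \<theta>) \<le> gd l (\<theta> * x + (1 - \<theta>) * y)"
proof -
  define C where "C = 1 / sqrt (2 * pi * (sqrt l)\<^sup>2)"
  define s where "s = 2 * (sqrt l)\<^sup>2"
  have C: "0 < C" using l by (simp add: C_def)
  have s: "0 < s" using l by (simp add: s_def)
  have g: "gd l w = C * exp (- w\<^sup>2 / s)" for w
    using l by (simp add: gd_normal normal_density_def C_def s_def)
  have "gd l x powr \<theta> * gd l y powr (1 - \<theta>) = C * exp (- (\<theta> * x\<^sup>2 + (1 - \<theta>) * y\<^sup>2) / s)"
  proof -
    have "gd l x powr \<theta> * gd l y powr (1 - \<theta>) = (C powr \<theta> * C powr (1 - \<theta>)) * (exp (- x\<^sup>2 / s * \<theta>) * exp (- y\<^sup>2 / s * (1 - \<theta>)))"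
      using C by (simp add: g powr_mult exp_powr_real)
    also have "C powr \<theta> * C powr (1 - \<theta>) = C" using C by (simp add: powr_add[symmetric])
    also have "exp (- x\<^sup>2 / s * \<theta>) * exp (- y\<^sup>2 / s * (1 - \<theta>)) = exp (- (\<theta> * x\<^sup>2 + (1 - \<theta>) * y\<^sup>2) / s)"
      unfolding exp_add[symmetric] using s by (intro arg_cong[where f=exp]) (simp add: field_simps)
    finally show ?thesis .
  qed
  also have "\<dots> \<le> C * exp (- (\<theta> * x + (1 - \<theta>) * y)\<^sup>2 / s)"
  proof -
    have "(\<theta> * x + (1 - \<theta>) * y)\<^sup>2 \<le> \<theta> * x\<^sup>2 + (1 - \<theta>) * y\<^sup>2"
    proof -
      have "\<theta> * x\<^sup>2 + (1 - \<theta>) * y\<^sup>2 - (\<theta> * x + (1 - \<theta>) * y)\<^sup>2 = \<theta> * (1 - \<theta>) * (x - y)\<^sup>2"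
        by (simp add: power2_eq_square algebra_simps)
      also have "\<dots> \<ge> 0" using th by simp
      finally show ?thesis by simp
    qed
    then have "- (\<theta> * x\<^sup>2 + (1 - \<theta>) * y\<^sup>2) / s \<le> - (\<theta> * x + (1 - \<theta>) * y)\<^sup>2 / s"
      using s by (intro divide_right_mono) auto
    then show ?thesis using C by (intro mult_left_mono) auto
  qed
  also have "\<dots> = gd l (\<theta> * x + (1 - \<theta>) * y)" by (simp add: g)
  finally show ?thesis .
qed

definition HN :: "('n \<Rightarrow> real) \<Rightarrow> 'n set \<Rightarrow> real \<Rightarrow> ennreal" where
  "HN lam J t = (\<integral>\<^sup>+w. ennreal (if (\<Sum>j\<in>J. (w j)\<^sup>2) < t then (\<Prod>j\<in>J. gd (lam j) (w j)) else 0) \<partial>(Pi\<^sub>M J (\<lambda>_. lborel)))"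

interpretation PL: product_sigma_finite "\<lambda>_::'n. lborel::real measure"
  by standard

lemma HN_empty: "HN lam {} t = (if 0 < t then 1 else 0)"
  unfolding HN_def by (subst PL.nn_integral_empty) auto

lemma HN_meas:
  fixes lam :: "'n \<Rightarrow> real"
  assumes "finite I"
  shows "(\<lambda>w. ennreal (if (\<Sum>j\<in>I. (w j)\<^sup>2) < t then (\<Prod>j\<in>I. gd (lam j) (w j)) else 0))
     \<in> borel_measurable (Pi\<^sub>M I (\<lambda>_. lborel))"
  by measurable

lemma HN_insert:
  fixes lam :: "'n \<Rightarrow> real"
  assumes J: "finite J" "i \<notin> J" and l: "0 < lam i"
  shows "HN lam (insert i J) t = (\<integral>\<^sup>+y. ennreal (gd (lam i) y) * HN lam J (t - y\<^sup>2) \<partial>lborel)"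
proof -
  have "HN lam (insert i J) t = (\<integral>\<^sup>+y. (\<integral>\<^sup>+w. ennreal (if (\<Sum>j\<in>insert i J. ((w(i:=y)) j)\<^sup>2) < t then (\<Prod>j\<in>insert i J. gd (lam j) ((w(i:=y)) j)) else 0) \<partial>(Pi\<^sub>M J (\<lambda>_. lborel))) \<partial>lborel)"
    unfolding HN_def by (rule PL.product_nn_integral_insert_rev[OF J HN_meas]) (use J in simp)
  also have "\<dots> = (\<integral>\<^sup>+y. (\<integral>\<^sup>+w. ennreal (gd (lam i) y) * ennreal (if (\<Sum>j\<in>J. (w j)\<^sup>2) < t - y\<^sup>2 then (\<Prod>j\<in>J. gd (lam j) (w j)) else 0) \<partial>(Pi\<^sub>M J (\<lambda>_. lborel))) \<partial>lborel)"
  proof (intro nn_integral_cong)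
    fix y :: real and w :: "'n \<Rightarrow> real"
    have s: "(\<Sum>j\<in>insert i J. ((w(i:=y)) j)\<^sup>2) = y\<^sup>2 + (\<Sum>j\<in>J. (w j)\<^sup>2)"
    proof -
      have "(\<Sum>j\<in>J. ((w(i:=y)) j)\<^sup>2) = (\<Sum>j\<in>J. (w j)\<^sup>2)" using J by (intro sum.cong) auto
      then show ?thesis using J by simp
    qed
    have p: "(\<Prod>j\<in>insert i J. gd (lam j) ((w(i:=y)) j)) = gd (lam i) y * (\<Prod>j\<in>J. gd (lam j) (w j))"
    proof -
      have "(\<Prod>j\<in>J. gd (lam j) ((w(i:=y)) j)) = (\<Prod>j\<in>J. gd (lam j) (w j))" using J by (intro prod.cong) auto
      then show ?thesis using J by simp
    qed
    show "ennreal (if (\<Sum>j\<in>insert i J. ((w(i:=y)) j)\<^sup>2) < t then (\<Prod>j\<in>insert i J. gd (lam j) ((w(i:=y)) j)) else 0)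
       = ennreal (gd (lam i) y) * ennreal (if (\<Sum>j\<in>J. (w j)\<^sup>2) < t - y\<^sup>2 then (\<Prod>j\<in>J. gd (lam j) (w j)) else 0)"
      unfolding s p using gd_nonneg[OF l, of y] by (auto simp: ennreal_mult' algebra_simps)
  qed
  also have "\<dots> = (\<integral>\<^sup>+y. ennreal (gd (lam i) y) * HN lam J (t - y\<^sup>2) \<partial>lborel)"
    unfolding HN_def by (intro nn_integral_cong nn_integral_cmult HN_meas J)
  finally show ?thesis .
qed

context
  fixes lam :: "'n \<Rightarrow> real"
  assumes lam: "\<And>j. 0 < lam j"
begin

lemma HN_mono: "t \<le> t' \<Longrightarrow> HN lam J t \<le> HN lam J t'"
  unfolding HN_def
  by (intro nn_integral_mono ennreal_leI) (auto intro!: prod_nonneg gd_nonneg lam)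

lemma HN_nonpos: "t \<le> 0 \<Longrightarrow> HN lam J t = 0"
proof -
  assume t: "t \<le> 0"
  have "\<not> (\<Sum>j\<in>J. (w j)\<^sup>2) < t" for w :: "'n \<Rightarrow> real"
    using t sum_nonneg[of J "\<lambda>j. (w j)\<^sup>2"] by auto
  then show ?thesis unfolding HN_def by simp
qed

lemma HN_le1: "finite J \<Longrightarrow> HN lam J t \<le> 1"
proof (induction J arbitrary: t rule: finite_induct)
  case empty then show ?case by (simp add: HN_empty)
next
  case (insert i J)
  have "HN lam (insert i J) t = (\<integral>\<^sup>+y. ennreal (gd (lam i) y) * HN lam J (t - y\<^sup>2) \<partial>lborel)"
    using insert lam by (intro HN_insert) auto
  also have "\<dots> \<le> (\<integral>\<^sup>+y. ennreal (gd (lam i) y) \<partial>lborel)"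
    using insert.IH by (intro nn_integral_mono) (simp add: mult_left_le)
  also have "\<dots> = 1" using lam by (rule gd_integral)
  finally show ?case .
qed

definition Hr :: "'n set \<Rightarrow> real \<Rightarrow> real" where
  "Hr J t = enn2real (HN lam J t)"

lemma HN_Hr: "finite J \<Longrightarrow> HN lam J t = ennreal (Hr J t)"
proof -
  assume "finite J"
  then have "HN lam J t < top" using HN_le1[of J t] by (simp add: le_less_trans)
  then show ?thesis unfolding Hr_def by (simp add: ennreal_enn2real_if)
qed

lemma Hr_nonneg: "0 \<le> Hr J t" by (simp add: Hr_def)

lemma Hr_le1: "finite J \<Longrightarrow> Hr J t \<le> 1"
  using HN_le1[of J t] HN_Hr[of J t] by (simp add: ennreal_le_1)

lemma Hr_mono: "finite J \<Longrightarrow> t \<le> t' \<Longrightarrow> Hr J t \<le> Hr J t'"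
  using HN_mono[of t t' J] HN_Hr[of J t] HN_Hr[of J t'] Hr_nonneg[of J t']
  by (simp add: ennreal_le_iff)

lemma Hr_nonpos: "t \<le> 0 \<Longrightarrow> Hr J t = 0"
  unfolding Hr_def by (simp add: HN_nonpos)

lemma Hr_meas[measurable]: "finite J \<Longrightarrow> Hr J \<in> borel_measurable borel"
  by (rule borel_measurable_mono) (auto simp: mono_def Hr_mono)

lemma Hr_insert:
  assumes "finite J" "i \<notin> J"
  shows "Hr (insert i J) t = enn2real (\<integral>\<^sup>+y. ennreal (gd (lam i) y * Hr J (t - y\<^sup>2)) \<partial>lborel)"
  unfolding Hr_def[of "insert i J"] using assms lam
  by (simp add: HN_insert HN_Hr ennreal_mult' gd_nonneg)

lemma Hr_lc: "finite J \<Longrightarrow> lc (Hr J)"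
proof (induction J rule: finite_induct)
  case empty
  have e: "Hr {} t = (if 0 < t then 1 else 0)" for t unfolding Hr_def by (simp add: HN_empty)
  show ?case unfolding lc_def
  proof (intro allI impI)
    fix x y \<theta> :: real assume th: "0 < \<theta>" "\<theta> < 1"
    show "Hr {} x powr \<theta> * Hr {} y powr (1 - \<theta>) \<le> Hr {} (\<theta> * x + (1 - \<theta>) * y)"
    proof (cases "0 < x \<and> 0 < y")
      case True
      then have "0 < \<theta> * x + (1 - \<theta>) * y" using th by (intro add_pos_pos mult_pos_pos) auto
      then show ?thesis using True by (simp add: e)
    next
      case False then show ?thesis by (auto simp: e)
    qed
  qed
next
  case (insert i J)
  define F where "F t y = gd (lam i) y * Hr J (t - y\<^sup>2)" for t y
  have Fm[measurable]: "F t \<in> borel_measurable borel" for t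
    unfolding F_def[abs_def] using insert(1) by measurable
  have Fn: "0 \<le> F t y" for t y unfolding F_def using lam by (intro mult_nonneg_nonneg gd_nonneg Hr_nonneg)
  have Fb: "F t y \<le> lam i powr (-1/2)" for t y
  proof -
    have "F t y \<le> gd (lam i) y * 1" unfolding F_def using insert(1) lam
      by (intro mult_left_mono Hr_le1 gd_nonneg) auto
    also have "\<dots> \<le> lam i powr (-1/2)" using gd_le[OF lam] by simp
    finally show ?thesis .
  qed
  have Fi: "(\<integral>\<^sup>+y. ennreal (F t y) \<partial>lborel) < \<infinity>" for t
  proof -
    have "(\<integral>\<^sup>+y. ennreal (F t y) \<partial>lborel) \<le> (\<integral>\<^sup>+y. ennreal (gd (lam i) y) \<partial>lborel)"
      unfolding F_def using insert(1) lam
      by (intro nn_integral_mono ennreal_leI) (auto intro!: mult_right_le_one_le gd_nonneg Hr_nonneg Hr_le1)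
    also have "\<dots> = 1" using lam by (rule gd_integral)
    finally show ?thesis by (simp add: le_less_trans)
  qed
  have jlc: "F t1 y1 powr \<theta> * F t2 y2 powr (1 - \<theta>) \<le> F (\<theta> * t1 + (1 - \<theta>) * t2) (\<theta> * y1 + (1 - \<theta>) * y2)"
    if th: "0 < \<theta>" "\<theta> < 1" for t1 t2 y1 y2 \<theta> :: real
  proof -
    have conv: "\<theta> * (t1 - y1\<^sup>2) + (1 - \<theta>) * (t2 - y2\<^sup>2) \<le> (\<theta> * t1 + (1 - \<theta>) * t2) - (\<theta> * y1 + (1 - \<theta>) * y2)\<^sup>2"
    proof -
      have "\<theta> * y1\<^sup>2 + (1 - \<theta>) * y2\<^sup>2 - (\<theta> * y1 + (1 - \<theta>) * y2)\<^sup>2 = \<theta> * (1 - \<theta>) * (y1 - y2)\<^sup>2"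
        by (simp add: power2_eq_square algebra_simps)
      also have "\<dots> \<ge> 0" using th by simp
      finally show ?thesis by (simp add: algebra_simps)
    qed
    have h1: "Hr J (t1 - y1\<^sup>2) powr \<theta> * Hr J (t2 - y2\<^sup>2) powr (1 - \<theta>) \<le> Hr J ((\<theta> * t1 + (1 - \<theta>) * t2) - (\<theta> * y1 + (1 - \<theta>) * y2)\<^sup>2)"
      using insert.IH th unfolding lc_def
      by (meson conv Hr_mono insert(1) order.trans)
    have h2: "gd (lam i) y1 powr \<theta> * gd (lam i) y2 powr (1 - \<theta>) \<le> gd (lam i) (\<theta> * y1 + (1 - \<theta>) * y2)"
      by (rule gd_lc[OF lam th])
    have "F t1 y1 powr \<theta> * F t2 y2 powr (1 - \<theta>) =
        (gd (lam i) y1 powr \<theta> * gd (lam i) y2 powr (1 - \<theta>)) * (Hr J (t1 - y1\<^sup>2) powr \<theta> * Hr J (t2 - y2\<^sup>2) powr (1 - \<theta>))"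
      unfolding F_def using lam by (simp add: powr_mult gd_nonneg Hr_nonneg)
    also have "\<dots> \<le> gd (lam i) (\<theta> * y1 + (1 - \<theta>) * y2) * Hr J ((\<theta> * t1 + (1 - \<theta>) * t2) - (\<theta> * y1 + (1 - \<theta>) * y2)\<^sup>2)"
      using h1 h2 lam by (intro mult_mono) (auto intro!: gd_nonneg Hr_nonneg)
    finally show ?thesis unfolding F_def .
  qed
  have "lc (\<lambda>t. enn2real (\<integral>\<^sup>+y. ennreal (F t y) \<partial>lborel))"
    by (rule prekopa[OF Fm Fn _ Fi jlc]) (auto intro: bdd_aboveI2[OF Fb])
  moreover have "Hr (insert i J) = (\<lambda>t. enn2real (\<integral>\<^sup>+y. ennreal (F t y) \<partial>lborel))"
    using insert by (auto simp: Hr_insert F_def)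
  ultimately show ?case by simp
qed

end

lemma powr_split_self: "0 \<le> (a::real) \<Longrightarrow> a powr t * a powr (1 - t) = a"
  by (cases "a = 0") (auto simp: powr_add[symmetric])

lemma lc_four:
  fixes H :: "real \<Rightarrow> real"
  assumes lcH: "lc H" and Hn: "\<And>x. 0 \<le> H x"
    and s: "s1 \<le> s3" "s3 \<le> s2" "s1 \<le> s4" "s4 \<le> s2" "s1 + s2 = s3 + s4"
  shows "H s1 * H s2 \<le> H s3 * H s4"
proof (cases "s3 = s1 \<or> s3 = s2")
  case True
  then have "(s3 = s1 \<and> s4 = s2) \<or> (s3 = s2 \<and> s4 = s1)" using s by auto
  then show ?thesis by (auto simp: mult.commute)
next
  case False
  then have lt: "s1 < s3" "s3 < s2" using s by auto
  define t where "t = (s2 - s3) / (s2 - s1)"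
  have t: "0 < t" "t < 1" using lt by (auto simp: t_def field_simps)
  have "t * (s2 - s1) = s2 - s3" using lt by (simp add: t_def)
  then have s3: "s3 = t * s1 + (1 - t) * s2" and s4: "s4 = (1 - t) * s1 + (1 - (1 - t)) * s2"
    using s(5) by (simp_all add: algebra_simps)
  have h3: "H s1 powr t * H s2 powr (1 - t) \<le> H s3" using lcH t unfolding lc_def s3 by blast
  have h4: "H s1 powr (1 - t) * H s2 powr (1 - (1 - t)) \<le> H s4" using lcH t unfolding lc_def s4
    by (metis diff_gt_0_iff_gt diff_less_eq less_add_same_cancel1)
  have "H s1 * H s2 = (H s1 powr t * H s2 powr (1 - t)) * (H s1 powr (1 - t) * H s2 powr (1 - (1 - t)))"
  proof -
    have e: "(H s1 powr t * H s2 powr (1 - t)) * (H s1 powr (1 - t) * H s2 powr (1 - (1 - t)))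
      = (H s1 powr t * H s1 powr (1 - t)) * (H s2 powr t * H s2 powr (1 - t))" by (simp add: ac_simps)
    show ?thesis unfolding e powr_split_self[OF Hn[of s1], of t] powr_split_self[OF Hn[of s2], of t] ..
  qed
  also have "\<dots> \<le> H s3 * H s4" using h3 h4 by (intro mult_mono) (auto simp: Hn)
  finally show ?thesis .
qed


lemma swap_int:
  fixes f :: "real \<Rightarrow> real \<Rightarrow> ennreal"
  assumes "case_prod f \<in> borel_measurable (lborel \<Otimes>\<^sub>M lborel)"
  shows "(\<integral>\<^sup>+x. \<integral>\<^sup>+y. f x y \<partial>lborel \<partial>lborel) = (\<integral>\<^sup>+y. \<integral>\<^sup>+x. f x y \<partial>lborel \<partial>lborel)"
proof -
  have "pair_sigma_finite (lborel::real measure) (lborel::real measure)"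
    by (intro pair_sigma_finite.intro sigma_finite_lborel)
  from pair_sigma_finite.Fubini'[OF this assms] show ?thesis by simp
qed

lemma add2:
  fixes f g :: "real \<Rightarrow> real \<Rightarrow> ennreal"
  assumes [measurable]: "case_prod f \<in> borel_measurable (lborel \<Otimes>\<^sub>M lborel)" "case_prod g \<in> borel_measurable (lborel \<Otimes>\<^sub>M lborel)"
  shows "(\<integral>\<^sup>+x. \<integral>\<^sup>+y. f x y + g x y \<partial>lborel \<partial>lborel) = (\<integral>\<^sup>+x. \<integral>\<^sup>+y. f x y \<partial>lborel \<partial>lborel) + (\<integral>\<^sup>+x. \<integral>\<^sup>+y. g x y \<partial>lborel \<partial>lborel)"
proof -
  have "(\<integral>\<^sup>+x. \<integral>\<^sup>+y. f x y + g x y \<partial>lborel \<partial>lborel) = (\<integral>\<^sup>+x. (\<integral>\<^sup>+y. f x y \<partial>lborel) + (\<integral>\<^sup>+y. g x y \<partial>lborel) \<partial>lborel)"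
    by (intro nn_integral_cong nn_integral_add) auto
  also have "\<dots> = (\<integral>\<^sup>+x. \<integral>\<^sup>+y. f x y \<partial>lborel \<partial>lborel) + (\<integral>\<^sup>+x. \<integral>\<^sup>+y. g x y \<partial>lborel \<partial>lborel)"
    by (intro nn_integral_add) (auto intro!: sigma_finite_measure.borel_measurable_nn_integral sigma_finite_lborel)
  finally show ?thesis .
qed

lemma prod_iter:
  fixes f g :: "real \<Rightarrow> real \<Rightarrow> real"
  assumes [measurable]: "case_prod f \<in> borel_measurable (lborel \<Otimes>\<^sub>M lborel)" "case_prod g \<in> borel_measurable (lborel \<Otimes>\<^sub>M lborel)"
    and fn: "\<And>x y. 0 \<le> f x y" and gn: "\<And>x y. 0 \<le> g x y"
  shows "(\<integral>\<^sup>+a. \<integral>\<^sup>+b. ennreal (f a b) \<partial>lborel \<partial>lborel) * (\<integral>\<^sup>+a'. \<integral>\<^sup>+b'. ennreal (g a' b') \<partial>lborel \<partial>lborel)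
     = (\<integral>\<^sup>+a. \<integral>\<^sup>+a'. \<integral>\<^sup>+b. \<integral>\<^sup>+b'. ennreal (f a b * g a' b') \<partial>lborel \<partial>lborel \<partial>lborel \<partial>lborel)"
proof -
  have m1: "(\<lambda>a. \<integral>\<^sup>+b. ennreal (f a b) \<partial>lborel) \<in> borel_measurable lborel"
    by (intro sigma_finite_measure.borel_measurable_nn_integral sigma_finite_lborel) measurable
  have m2: "(\<lambda>a. \<integral>\<^sup>+b. ennreal (g a b) \<partial>lborel) \<in> borel_measurable lborel"
    by (intro sigma_finite_measure.borel_measurable_nn_integral sigma_finite_lborel) measurable
  have "(\<integral>\<^sup>+a. \<integral>\<^sup>+b. ennreal (f a b) \<partial>lborel \<partial>lborel) * (\<integral>\<^sup>+a'. \<integral>\<^sup>+b'. ennreal (g a' b') \<partial>lborel \<partial>lborel)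
      = (\<integral>\<^sup>+a. (\<integral>\<^sup>+b. ennreal (f a b) \<partial>lborel) * (\<integral>\<^sup>+a'. \<integral>\<^sup>+b'. ennreal (g a' b') \<partial>lborel \<partial>lborel) \<partial>lborel)"
    by (rule nn_integral_multc[OF m1, symmetric])
  also have "\<dots> = (\<integral>\<^sup>+a. \<integral>\<^sup>+a'. (\<integral>\<^sup>+b. ennreal (f a b) \<partial>lborel) * (\<integral>\<^sup>+b'. ennreal (g a' b') \<partial>lborel) \<partial>lborel \<partial>lborel)"
    by (intro nn_integral_cong nn_integral_cmult[OF m2, symmetric])
  also have "\<dots> = (\<integral>\<^sup>+a. \<integral>\<^sup>+a'. \<integral>\<^sup>+b. \<integral>\<^sup>+b'. ennreal (f a b * g a' b') \<partial>lborel \<partial>lborel \<partial>lborel \<partial>lborel)"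
  proof (intro nn_integral_cong)
    fix a a' :: real
    have "(\<integral>\<^sup>+b. ennreal (f a b) \<partial>lborel) * (\<integral>\<^sup>+b'. ennreal (g a' b') \<partial>lborel)
        = (\<integral>\<^sup>+b. ennreal (f a b) * (\<integral>\<^sup>+b'. ennreal (g a' b') \<partial>lborel) \<partial>lborel)"
      by (rule nn_integral_multc[symmetric]) measurable
    also have "\<dots> = (\<integral>\<^sup>+b. \<integral>\<^sup>+b'. ennreal (f a b) * ennreal (g a' b') \<partial>lborel \<partial>lborel)"
      by (intro nn_integral_cong nn_integral_cmult[symmetric]) measurable
    also have "\<dots> = (\<integral>\<^sup>+b. \<integral>\<^sup>+b'. ennreal (f a b * g a' b') \<partial>lborel \<partial>lborel)"
      using fn gn by (intro nn_integral_cong) (simp add: ennreal_mult)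
    finally show "(\<integral>\<^sup>+b. ennreal (f a b) \<partial>lborel) * (\<integral>\<^sup>+b'. ennreal (g a' b') \<partial>lborel)
        = (\<integral>\<^sup>+b. \<integral>\<^sup>+b'. ennreal (f a b * g a' b') \<partial>lborel \<partial>lborel)" .
  qed
  finally show ?thesis .
qed

locale twoD =
  fixes gn gm H :: "real \<Rightarrow> real" and \<rho> :: real
  assumes gnm[measurable]: "gn \<in> borel_measurable borel" and gmm[measurable]: "gm \<in> borel_measurable borel"
    and Hm[measurable]: "H \<in> borel_measurable borel"
    and gnn: "\<And>x. 0 \<le> gn x" and gmn: "\<And>x. 0 \<le> gm x" and Hn: "\<And>x. 0 \<le> H x" and lcH: "lc H"
begin

definition P :: "real \<Rightarrow> real \<Rightarrow> real" where "P a b = gn a * gm b * H (\<rho> - a\<^sup>2 - b\<^sup>2)"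

lemma P_nonneg: "0 \<le> P a b" unfolding P_def by (simp add: gnn gmn Hn)

lemma P_meas[measurable]: "(\<lambda>(a, b). P a b) \<in> borel_measurable (lborel \<Otimes>\<^sub>M lborel)"
  unfolding P_def by measurable

lemma P_swap:
  assumes "a'\<^sup>2 \<le> a\<^sup>2" "b'\<^sup>2 \<le> b\<^sup>2"
  shows "P a b * P a' b' \<le> P a b' * P a' b"
proof -
  have "H (\<rho> - a\<^sup>2 - b\<^sup>2) * H (\<rho> - a'\<^sup>2 - b'\<^sup>2) \<le> H (\<rho> - a\<^sup>2 - b'\<^sup>2) * H (\<rho> - a'\<^sup>2 - b\<^sup>2)"
    using assms by (intro lc_four[OF lcH Hn]) auto
  then have "(gn a * gm b * gn a' * gm b') * (H (\<rho> - a\<^sup>2 - b\<^sup>2) * H (\<rho> - a'\<^sup>2 - b'\<^sup>2))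
      \<le> (gn a * gm b * gn a' * gm b') * (H (\<rho> - a\<^sup>2 - b'\<^sup>2) * H (\<rho> - a'\<^sup>2 - b\<^sup>2))"
    by (intro mult_left_mono) (auto simp: gnn gmn)
  then show ?thesis unfolding P_def by (simp add: ac_simps)
qed

lemma pointwise:
  assumes "a'\<^sup>2 \<le> a\<^sup>2"
  shows "ennreal (b\<^sup>2 * (P a b * P a' b')) + ennreal (b'\<^sup>2 * (P a b' * P a' b))
      \<le> ennreal (b'\<^sup>2 * (P a b * P a' b')) + ennreal (b\<^sup>2 * (P a b' * P a' b))"
proof -
  define X where "X = P a b * P a' b'"
  define Y where "Y = P a b' * P a' b"
  have X0: "0 \<le> X" "0 \<le> Y" unfolding X_def Y_def by (simp_all add: P_nonneg)
  have "(b\<^sup>2 - b'\<^sup>2) * (X - Y) \<le> 0"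
  proof (cases "b'\<^sup>2 \<le> b\<^sup>2")
    case True
    then have "X \<le> Y" unfolding X_def Y_def using P_swap[OF assms True] by simp
    then show ?thesis using True by (intro mult_nonneg_nonpos) auto
  next
    case False
    then have bb: "b\<^sup>2 \<le> b'\<^sup>2" by simp
    have "Y \<le> X" unfolding X_def Y_def using P_swap[OF assms bb] by (simp add: ac_simps)
    then show ?thesis using False by (intro mult_nonpos_nonneg) auto
  qed
  then have r: "b\<^sup>2 * X + b'\<^sup>2 * Y \<le> b'\<^sup>2 * X + b\<^sup>2 * Y" by (simp add: algebra_simps)
  have "ennreal (b\<^sup>2 * X) + ennreal (b'\<^sup>2 * Y) = ennreal (b\<^sup>2 * X + b'\<^sup>2 * Y)"
    using X0 by (simp add: ennreal_plus)
  also have "\<dots> \<le> ennreal (b'\<^sup>2 * X + b\<^sup>2 * Y)" using r by (rule ennreal_leI)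
  also have "\<dots> = ennreal (b'\<^sup>2 * X) + ennreal (b\<^sup>2 * Y)"
    using X0 by (simp add: ennreal_plus)
  finally show ?thesis unfolding X_def Y_def .
qed

definition In :: "real \<Rightarrow> real \<Rightarrow> ennreal" where
  "In a a' = (\<integral>\<^sup>+b. \<integral>\<^sup>+b'. ennreal (b\<^sup>2 * (P a b * P a' b')) \<partial>lborel \<partial>lborel)"
definition In' :: "real \<Rightarrow> real \<Rightarrow> ennreal" where
  "In' a a' = (\<integral>\<^sup>+b. \<integral>\<^sup>+b'. ennreal (b'\<^sup>2 * (P a b * P a' b')) \<partial>lborel \<partial>lborel)"

lemma In_swap: "In a' a = In' a a'"
proof -
  have "In a' a = (\<integral>\<^sup>+b'. \<integral>\<^sup>+b. ennreal (b\<^sup>2 * (P a' b * P a b')) \<partial>lborel \<partial>lborel)"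
    unfolding In_def by (rule swap_int) measurable
  also have "\<dots> = In' a a'" unfolding In'_def by (simp add: ac_simps)
  finally show ?thesis .
qed

lemma In_le:
  assumes "a'\<^sup>2 \<le> a\<^sup>2"
  shows "In a a' \<le> In' a a'"
proof -
  have T2: "(\<integral>\<^sup>+b. \<integral>\<^sup>+b'. ennreal (b'\<^sup>2 * (P a b' * P a' b)) \<partial>lborel \<partial>lborel) = In a a'"
  proof -
    have "(\<integral>\<^sup>+b. \<integral>\<^sup>+b'. ennreal (b'\<^sup>2 * (P a b' * P a' b)) \<partial>lborel \<partial>lborel)
        = (\<integral>\<^sup>+b'. \<integral>\<^sup>+b. ennreal (b'\<^sup>2 * (P a b' * P a' b)) \<partial>lborel \<partial>lborel)"
      by (rule swap_int) measurable
    then show ?thesis unfolding In_def by simp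
  qed
  have T3: "(\<integral>\<^sup>+b. \<integral>\<^sup>+b'. ennreal (b\<^sup>2 * (P a b' * P a' b)) \<partial>lborel \<partial>lborel) = In' a a'"
  proof -
    have "(\<integral>\<^sup>+b. \<integral>\<^sup>+b'. ennreal (b\<^sup>2 * (P a b' * P a' b)) \<partial>lborel \<partial>lborel)
        = (\<integral>\<^sup>+b'. \<integral>\<^sup>+b. ennreal (b\<^sup>2 * (P a b' * P a' b)) \<partial>lborel \<partial>lborel)"
      by (rule swap_int) measurable
    then show ?thesis unfolding In'_def by simp
  qed
  have "In a a' + In a a' = In a a' + (\<integral>\<^sup>+b. \<integral>\<^sup>+b'. ennreal (b'\<^sup>2 * (P a b' * P a' b)) \<partial>lborel \<partial>lborel)"
    by (simp only: T2)
  also have "\<dots> = (\<integral>\<^sup>+b. \<integral>\<^sup>+b'. ennreal (b\<^sup>2 * (P a b * P a' b')) + ennreal (b'\<^sup>2 * (P a b' * P a' b)) \<partial>lborel \<partial>lborel)"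
    unfolding In_def by (rule add2[symmetric]) measurable
  also have "\<dots> \<le> (\<integral>\<^sup>+b. \<integral>\<^sup>+b'. ennreal (b'\<^sup>2 * (P a b * P a' b')) + ennreal (b\<^sup>2 * (P a b' * P a' b)) \<partial>lborel \<partial>lborel)"
    by (intro nn_integral_mono pointwise[OF assms])
  also have "\<dots> = In' a a' + (\<integral>\<^sup>+b. \<integral>\<^sup>+b'. ennreal (b\<^sup>2 * (P a b' * P a' b)) \<partial>lborel \<partial>lborel)"
    unfolding In'_def by (rule add2) measurable
  also have "\<dots> = In' a a' + In' a a'" by (simp only: T3)
  finally have "2 * In a a' \<le> 2 * In' a a'" by (simp add: mult_2)
  then show ?thesis by (subst (asm) ennreal_mult_le_mult_iff) auto
qed

end

context twoD begin

lemma In_meas[measurable]: "(\<lambda>(a, a'). In a a') \<in> borel_measurable (lborel \<Otimes>\<^sub>M lborel)"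
  unfolding In_def by measurable

lemma In'_meas[measurable]: "(\<lambda>(a, a'). In' a a') \<in> borel_measurable (lborel \<Otimes>\<^sub>M lborel)"
  unfolding In'_def by measurable

lemma pointwise2: "ennreal (a\<^sup>2) * In a a' + ennreal (a'\<^sup>2) * In' a a' \<le> ennreal (a\<^sup>2) * In' a a' + ennreal (a'\<^sup>2) * In a a'"
proof (cases "a'\<^sup>2 \<le> a\<^sup>2")
  case True
  define d where "d = a\<^sup>2 - a'\<^sup>2"
  have d: "0 \<le> d" "ennreal (a\<^sup>2) = ennreal (a'\<^sup>2) + ennreal d" using True by (auto simp: d_def ennreal_plus[symmetric])
  have le: "In a a' \<le> In' a a'" by (rule In_le[OF True])
  have "ennreal (a\<^sup>2) * In a a' + ennreal (a'\<^sup>2) * In' a a' = ennreal (a'\<^sup>2) * In a a' + ennreal d * In a a' + ennreal (a'\<^sup>2) * In' a a'"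
    by (simp add: d distrib_right)
  also have "\<dots> \<le> ennreal (a'\<^sup>2) * In a a' + ennreal d * In' a a' + ennreal (a'\<^sup>2) * In' a a'"
    using le by (intro add_mono mult_left_mono) auto
  also have "\<dots> = ennreal (a\<^sup>2) * In' a a' + ennreal (a'\<^sup>2) * In a a'"
    unfolding d(2) distrib_right by (simp only: add_ac)
  finally show ?thesis .
next
  case False
  define d where "d = a'\<^sup>2 - a\<^sup>2"
  have d: "0 \<le> d" "ennreal (a'\<^sup>2) = ennreal (a\<^sup>2) + ennreal d" using False by (auto simp: d_def ennreal_plus[symmetric])
  have "In a' a \<le> In' a' a" using False by (intro In_le) simp
  then have le: "In' a a' \<le> In a a'" using In_swap[of a' a] In_swap[of a a'] by simp
  have "ennreal (a\<^sup>2) * In a a' + ennreal (a'\<^sup>2) * In' a a' = ennreal (a\<^sup>2) * In a a' + ennreal (a\<^sup>2) * In' a a' + ennreal d * In' a a'"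
    unfolding d(2) distrib_right by (simp only: add_ac)
  also have "\<dots> \<le> ennreal (a\<^sup>2) * In a a' + ennreal (a\<^sup>2) * In' a a' + ennreal d * In a a'"
    using le by (intro add_mono mult_left_mono) auto
  also have "\<dots> = ennreal (a\<^sup>2) * In' a a' + ennreal (a'\<^sup>2) * In a a'"
    unfolding d(2) distrib_right by (simp only: add_ac)
  finally show ?thesis .
qed

lemma main2D:
  "(\<integral>\<^sup>+a. \<integral>\<^sup>+b. ennreal (a\<^sup>2 * b\<^sup>2 * P a b) \<partial>lborel \<partial>lborel) * (\<integral>\<^sup>+a. \<integral>\<^sup>+b. ennreal (P a b) \<partial>lborel \<partial>lborel)
   \<le> (\<integral>\<^sup>+a. \<integral>\<^sup>+b. ennreal (a\<^sup>2 * P a b) \<partial>lborel \<partial>lborel) * (\<integral>\<^sup>+a. \<integral>\<^sup>+b. ennreal (b\<^sup>2 * P a b) \<partial>lborel \<partial>lborel)"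
proof -
  define A where "A = (\<integral>\<^sup>+a. \<integral>\<^sup>+a'. ennreal (a\<^sup>2) * In a a' \<partial>lborel \<partial>lborel)"
  define B where "B = (\<integral>\<^sup>+a. \<integral>\<^sup>+a'. ennreal (a\<^sup>2) * In' a a' \<partial>lborel \<partial>lborel)"
  have L: "(\<integral>\<^sup>+a. \<integral>\<^sup>+b. ennreal (a\<^sup>2 * b\<^sup>2 * P a b) \<partial>lborel \<partial>lborel) * (\<integral>\<^sup>+a. \<integral>\<^sup>+b. ennreal (P a b) \<partial>lborel \<partial>lborel) = A"
  proof -
    have "(\<integral>\<^sup>+a. \<integral>\<^sup>+b. ennreal (a\<^sup>2 * b\<^sup>2 * P a b) \<partial>lborel \<partial>lborel) * (\<integral>\<^sup>+a. \<integral>\<^sup>+b. ennreal (P a b) \<partial>lborel \<partial>lborel)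
      = (\<integral>\<^sup>+a. \<integral>\<^sup>+a'. \<integral>\<^sup>+b. \<integral>\<^sup>+b'. ennreal (a\<^sup>2 * b\<^sup>2 * P a b * P a' b') \<partial>lborel \<partial>lborel \<partial>lborel \<partial>lborel)"
      by (rule prod_iter) (auto simp: P_nonneg)
    also have "\<dots> = A" unfolding A_def In_def
    proof (intro nn_integral_cong)
      fix a a' :: real
      have "(\<integral>\<^sup>+b. \<integral>\<^sup>+b'. ennreal (a\<^sup>2 * b\<^sup>2 * P a b * P a' b') \<partial>lborel \<partial>lborel)
          = (\<integral>\<^sup>+b. \<integral>\<^sup>+b'. ennreal (a\<^sup>2) * ennreal (b\<^sup>2 * (P a b * P a' b')) \<partial>lborel \<partial>lborel)"
        by (intro nn_integral_cong) (simp add: ennreal_mult[symmetric] P_nonneg ac_simps)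
      also have "\<dots> = (\<integral>\<^sup>+b. ennreal (a\<^sup>2) * \<integral>\<^sup>+b'. ennreal (b\<^sup>2 * (P a b * P a' b')) \<partial>lborel \<partial>lborel)"
        by (intro nn_integral_cong nn_integral_cmult) measurable
      also have "\<dots> = ennreal (a\<^sup>2) * (\<integral>\<^sup>+b. \<integral>\<^sup>+b'. ennreal (b\<^sup>2 * (P a b * P a' b')) \<partial>lborel \<partial>lborel)"
        by (intro nn_integral_cmult) measurable
      finally show "(\<integral>\<^sup>+b. \<integral>\<^sup>+b'. ennreal (a\<^sup>2 * b\<^sup>2 * P a b * P a' b') \<partial>lborel \<partial>lborel)
          = ennreal (a\<^sup>2) * (\<integral>\<^sup>+b. \<integral>\<^sup>+b'. ennreal (b\<^sup>2 * (P a b * P a' b')) \<partial>lborel \<partial>lborel)" .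
    qed
    finally show ?thesis .
  qed
  have R: "(\<integral>\<^sup>+a. \<integral>\<^sup>+b. ennreal (a\<^sup>2 * P a b) \<partial>lborel \<partial>lborel) * (\<integral>\<^sup>+a. \<integral>\<^sup>+b. ennreal (b\<^sup>2 * P a b) \<partial>lborel \<partial>lborel) = B"
  proof -
    have "(\<integral>\<^sup>+a. \<integral>\<^sup>+b. ennreal (a\<^sup>2 * P a b) \<partial>lborel \<partial>lborel) * (\<integral>\<^sup>+a. \<integral>\<^sup>+b. ennreal (b\<^sup>2 * P a b) \<partial>lborel \<partial>lborel)
      = (\<integral>\<^sup>+a. \<integral>\<^sup>+a'. \<integral>\<^sup>+b. \<integral>\<^sup>+b'. ennreal (a\<^sup>2 * P a b * (b'\<^sup>2 * P a' b')) \<partial>lborel \<partial>lborel \<partial>lborel \<partial>lborel)"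
      by (rule prod_iter) (auto simp: P_nonneg)
    also have "\<dots> = B" unfolding B_def In'_def
    proof (intro nn_integral_cong)
      fix a a' :: real
      have "(\<integral>\<^sup>+b. \<integral>\<^sup>+b'. ennreal (a\<^sup>2 * P a b * (b'\<^sup>2 * P a' b')) \<partial>lborel \<partial>lborel)
          = (\<integral>\<^sup>+b. \<integral>\<^sup>+b'. ennreal (a\<^sup>2) * ennreal (b'\<^sup>2 * (P a b * P a' b')) \<partial>lborel \<partial>lborel)"
        by (intro nn_integral_cong) (simp add: ennreal_mult[symmetric] P_nonneg ac_simps)
      also have "\<dots> = (\<integral>\<^sup>+b. ennreal (a\<^sup>2) * \<integral>\<^sup>+b'. ennreal (b'\<^sup>2 * (P a b * P a' b')) \<partial>lborel \<partial>lborel)"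
        by (intro nn_integral_cong nn_integral_cmult) measurable
      also have "\<dots> = ennreal (a\<^sup>2) * (\<integral>\<^sup>+b. \<integral>\<^sup>+b'. ennreal (b'\<^sup>2 * (P a b * P a' b')) \<partial>lborel \<partial>lborel)"
        by (intro nn_integral_cmult) measurable
      finally show "(\<integral>\<^sup>+b. \<integral>\<^sup>+b'. ennreal (a\<^sup>2 * P a b * (b'\<^sup>2 * P a' b')) \<partial>lborel \<partial>lborel)
          = ennreal (a\<^sup>2) * (\<integral>\<^sup>+b. \<integral>\<^sup>+b'. ennreal (b'\<^sup>2 * (P a b * P a' b')) \<partial>lborel \<partial>lborel)" .
    qed
    finally show ?thesis .
  qed
  have A2: "A = (\<integral>\<^sup>+a. \<integral>\<^sup>+a'. ennreal (a'\<^sup>2) * In' a a' \<partial>lborel \<partial>lborel)"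
  proof -
    have "A = (\<integral>\<^sup>+a'. \<integral>\<^sup>+a. ennreal (a\<^sup>2) * In a a' \<partial>lborel \<partial>lborel)"
      unfolding A_def by (rule swap_int) measurable
    also have "\<dots> = (\<integral>\<^sup>+a. \<integral>\<^sup>+a'. ennreal (a'\<^sup>2) * In' a a' \<partial>lborel \<partial>lborel)"
      by (simp add: In_swap)
    finally show ?thesis .
  qed
  have B2: "B = (\<integral>\<^sup>+a. \<integral>\<^sup>+a'. ennreal (a'\<^sup>2) * In a a' \<partial>lborel \<partial>lborel)"
  proof -
    have "B = (\<integral>\<^sup>+a'. \<integral>\<^sup>+a. ennreal (a\<^sup>2) * In' a a' \<partial>lborel \<partial>lborel)"
      unfolding B_def by (rule swap_int) measurable
    also have "\<dots> = (\<integral>\<^sup>+a. \<integral>\<^sup>+a'. ennreal (a'\<^sup>2) * In a a' \<partial>lborel \<partial>lborel)"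
      by (simp add: In_swap[symmetric])
    finally show ?thesis .
  qed
  have "A + A = (\<integral>\<^sup>+a. \<integral>\<^sup>+a'. ennreal (a\<^sup>2) * In a a' + ennreal (a'\<^sup>2) * In' a a' \<partial>lborel \<partial>lborel)"
    unfolding A_def[of] 
    by (subst (2) A_def[symmetric], subst A2, rule add2[symmetric]) measurable
  also have "\<dots> \<le> (\<integral>\<^sup>+a. \<integral>\<^sup>+a'. ennreal (a\<^sup>2) * In' a a' + ennreal (a'\<^sup>2) * In a a' \<partial>lborel \<partial>lborel)"
    by (intro nn_integral_mono pointwise2)
  also have "\<dots> = B + B"
    by (subst (2) B2, unfold B_def, rule add2) measurable
  finally have "2 * A \<le> 2 * B" by (simp add: mult_2)
  then have "A \<le> B" by (subst (asm) ennreal_mult_le_mult_iff) auto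
  then show ?thesis using L R by simp
qed

end

lemma vec_meas[measurable]:
  "(\<lambda>\<omega>. (\<chi> i. \<omega> i) :: real^'n) \<in> borel_measurable (Pi\<^sub>M UNIV (\<lambda>_::'n. lborel))"
proof (subst borel_measurable_euclidean_space, intro ballI)
  fix b :: "real^'n" assume "b \<in> Basis"
  then obtain j where b: "b = axis j 1" by (auto simp: Basis_vec_def)
  have "(\<lambda>\<omega>. (\<chi> i. \<omega> i) \<bullet> b) = (\<lambda>\<omega>::'n\<Rightarrow>real. \<omega> j)"
    unfolding b by (simp add: inner_axis)
  then show "(\<lambda>\<omega>. (\<chi> i. \<omega> i) \<bullet> b) \<in> borel_measurable (Pi\<^sub>M UNIV (\<lambda>_::'n. lborel))" by simp
qed

lemma lborel_vec: "(lborel :: (real^'n) measure) = distr (Pi\<^sub>M UNIV (\<lambda>_::'n. lborel)) borel (\<lambda>\<omega>. \<chi> i. \<omega> i)"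
proof (rule lborel_eqI)
  fix l u :: "real^'n" assume lu: "\<And>b. b \<in> Basis \<Longrightarrow> l \<bullet> b \<le> u \<bullet> b"
  have lu': "l $ i \<le> u $ i" for i using lu[of "axis i 1"] by (simp add: Basis_vec_def cart_eq_inner_axis inner_commute) blast
  have pre: "(\<lambda>\<omega>. \<chi> i. \<omega> i) -` box l u \<inter> space (Pi\<^sub>M UNIV (\<lambda>_::'n. lborel)) = (\<Pi>\<^sub>E i\<in>UNIV. {l $ i <..< u $ i})"
    by (auto simp: mem_box_cart space_PiM PiE_iff)
  have "emeasure (distr (Pi\<^sub>M UNIV (\<lambda>_::'n. lborel)) borel (\<lambda>\<omega>. \<chi> i. \<omega> i)) (box l u)
      = emeasure (Pi\<^sub>M UNIV (\<lambda>_::'n. lborel)) (\<Pi>\<^sub>E i\<in>UNIV. {l $ i <..< u $ i})"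
    by (subst emeasure_distr) (auto simp: pre)
  also have "\<dots> = (\<Prod>i\<in>UNIV. emeasure lborel {l $ i <..< u $ i})"
    by (rule PL.emeasure_PiM) auto
  also have "\<dots> = (\<Prod>i\<in>UNIV. ennreal (u $ i - l $ i))" using lu' by simp
  also have "\<dots> = ennreal (\<Prod>i\<in>UNIV. u $ i - l $ i)" using lu' by (simp add: prod_ennreal)
  also have "(\<Prod>i\<in>UNIV. u $ i - l $ i) = Henstock_Kurzweil_Integration.content (cbox l u)"
  proof -
    have "l \<in> cbox l u" using lu' by (simp add: mem_box_cart)
    then show ?thesis by (subst content_cbox_cart) auto
  qed
  also have "ennreal (Henstock_Kurzweil_Integration.content (cbox l u)) = emeasure lborel (cbox l u)"
    using emeasure_lborel_cbox_finite[of l u] by (simp add: emeasure_eq_ennreal_measure)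
  also have "\<dots> = ennreal (\<Prod>b\<in>Basis. (u - l) \<bullet> b)"
    using lu by (simp add: emeasure_lborel_cbox_eq)
  finally show "emeasure (distr (Pi\<^sub>M UNIV (\<lambda>_::'n. lborel)) borel (\<lambda>\<omega>. \<chi> i. \<omega> i)) (box l u) = ennreal (\<Prod>b\<in>Basis. (u - l) \<bullet> b)" .
qed simp

lemma nn_integral_vec:
  fixes f :: "real^'n \<Rightarrow> ennreal"
  assumes [measurable]: "f \<in> borel_measurable borel"
  shows "(\<integral>\<^sup>+x. f x \<partial>lborel) = (\<integral>\<^sup>+\<omega>. f (\<chi> i. \<omega> i) \<partial>Pi\<^sub>M UNIV (\<lambda>_::'n. lborel))"
  by (subst lborel_vec) (simp add: nn_integral_distr)

lemma unnorm_gd: "trunc_normal_unnorm lam rho x = (if x \<bullet> x < rho then (\<Prod>i\<in>UNIV. gd (lam i) (x $ i)) else 0)"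
  unfolding trunc_normal_unnorm_def gd_def by simp

lemma unnorm_meas[measurable]: "trunc_normal_unnorm lam rho \<in> borel_measurable borel"
  unfolding unnorm_gd[abs_def] by measurable

lemma twoD_inst:
  fixes lam :: "'n \<Rightarrow> real"
  assumes lam: "\<And>j. 0 < lam j" and R: "finite R"
  shows "twoD (gd (lam n)) (gd (lam m)) (Hr lam R)"
proof
  show "gd (lam n) \<in> borel_measurable borel" "gd (lam m) \<in> borel_measurable borel" by simp_all
  show "Hr lam R \<in> borel_measurable borel" by (rule Hr_meas[OF lam R])
  show "0 \<le> gd (lam n) x" "0 \<le> gd (lam m) x" for x using lam by (simp_all add: gd_nonneg)
  show "0 \<le> Hr lam R x" for x by (rule Hr_nonneg[OF lam])
  show "lc (Hr lam R)" by (rule Hr_lc[OF lam R])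
qed

lemma transfer:
  fixes lam :: "'n::finite \<Rightarrow> real" and n m :: 'n and p q :: nat
  assumes lam: "\<And>j. 0 < lam j" and nm: "n \<noteq> m"
  defines "R \<equiv> UNIV - {n, m}"
  shows "(\<integral>\<^sup>+x. ennreal (trunc_normal_unnorm lam rho x * (((x$n)\<^sup>2)^p * ((x$m)\<^sup>2)^q)) \<partial>lborel) =
    (\<integral>\<^sup>+a. \<integral>\<^sup>+b. ennreal ((a\<^sup>2)^p * (b\<^sup>2)^q * twoD.P (gd (lam n)) (gd (lam m)) (Hr lam R) rho a b) \<partial>lborel \<partial>lborel)"
proof -
  define g where "g w = ennreal ((if (\<Sum>i\<in>UNIV. (w i)\<^sup>2) < rho then (\<Prod>i\<in>UNIV. gd (lam i) (w i)) else 0) * (((w n)\<^sup>2)^p * ((w m)\<^sup>2)^q))" for w :: "'n \<Rightarrow> real"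
  have U: "(UNIV :: 'n set) = insert n (insert m R)" unfolding R_def by auto
  have R: "finite R" "n \<notin> insert m R" "m \<notin> R" using nm unfolding R_def by auto
  have gm[measurable]: "g \<in> borel_measurable (Pi\<^sub>M (insert n (insert m R)) (\<lambda>_. lborel))"
    unfolding g_def U[symmetric] by measurable
  have "(\<integral>\<^sup>+x. ennreal (trunc_normal_unnorm lam rho x * (((x$n)\<^sup>2)^p * ((x$m)\<^sup>2)^q)) \<partial>lborel)
      = (\<integral>\<^sup>+w. g w \<partial>(Pi\<^sub>M UNIV (\<lambda>_::'n. lborel)))"
    by (subst nn_integral_vec) (auto simp: g_def unnorm_gd inner_vec_def power2_eq_square intro!: nn_integral_cong)
  also have "\<dots> = (\<integral>\<^sup>+w. g w \<partial>(Pi\<^sub>M (insert n (insert m R)) (\<lambda>_::'n. lborel)))" by (simp only: U)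
  also have "\<dots> = (\<integral>\<^sup>+a. \<integral>\<^sup>+w. g (w(n := a)) \<partial>(Pi\<^sub>M (insert m R) (\<lambda>_::'n. lborel)) \<partial>lborel)"
    using R by (intro PL.product_nn_integral_insert_rev gm) auto
  also have "\<dots> = (\<integral>\<^sup>+a. \<integral>\<^sup>+b. \<integral>\<^sup>+w. g (w(m := b, n := a)) \<partial>(Pi\<^sub>M R (\<lambda>_::'n. lborel)) \<partial>lborel \<partial>lborel)"
  proof (intro nn_integral_cong)
    fix a :: real
    have [measurable]: "(\<lambda>w. g (w(n := a))) \<in> borel_measurable (Pi\<^sub>M (insert m R) (\<lambda>_::'n. lborel))"
    proof -
      have upd: "(\<lambda>w. w(n := a)) \<in> measurable (Pi\<^sub>M (insert m R) (\<lambda>_::'n. lborel)) (Pi\<^sub>M (insert n (insert m R)) (\<lambda>_::'n. lborel))"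
        by (rule measurable_fun_upd[where J="insert m R"]) auto
      show ?thesis by (rule measurable_compose[OF upd gm])
    qed
    show "(\<integral>\<^sup>+w. g (w(n := a)) \<partial>(Pi\<^sub>M (insert m R) (\<lambda>_::'n. lborel))) = (\<integral>\<^sup>+b. \<integral>\<^sup>+w. g (w(m := b, n := a)) \<partial>(Pi\<^sub>M R (\<lambda>_::'n. lborel)) \<partial>lborel)"
      using R by (subst PL.product_nn_integral_insert_rev) auto
  qed
  also have "\<dots> = (\<integral>\<^sup>+a. \<integral>\<^sup>+b. ennreal ((a\<^sup>2)^p * (b\<^sup>2)^q * twoD.P (gd (lam n)) (gd (lam m)) (Hr lam R) rho a b) \<partial>lborel \<partial>lborel)"
  proof (intro nn_integral_cong)
    fix a b :: real
    define c where "c = (a\<^sup>2)^p * (b\<^sup>2)^q * gd (lam n) a * gd (lam m) b"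
    have c0: "0 \<le> c" unfolding c_def using lam by (intro mult_nonneg_nonneg gd_nonneg) auto
    have eq: "g (w(m := b, n := a)) = ennreal c * ennreal (if (\<Sum>j\<in>R. (w j)\<^sup>2) < rho - a\<^sup>2 - b\<^sup>2 then (\<Prod>j\<in>R. gd (lam j) (w j)) else 0)" for w
    proof -
      have s: "(\<Sum>i\<in>UNIV. ((w(m := b, n := a)) i)\<^sup>2) = a\<^sup>2 + b\<^sup>2 + (\<Sum>j\<in>R. (w j)\<^sup>2)"
      proof -
        have "(\<Sum>j\<in>R. ((w(m := b, n := a)) j)\<^sup>2) = (\<Sum>j\<in>R. (w j)\<^sup>2)" using R by (intro sum.cong) auto
        then show ?thesis unfolding U using R nm by simp
      qed
      have pr: "(\<Prod>i\<in>UNIV. gd (lam i) ((w(m := b, n := a)) i)) = gd (lam n) a * gd (lam m) b * (\<Prod>j\<in>R. gd (lam j) (w j))"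
      proof -
        have "(\<Prod>j\<in>R. gd (lam j) ((w(m := b, n := a)) j)) = (\<Prod>j\<in>R. gd (lam j) (w j))" using R by (intro prod.cong) auto
        then show ?thesis unfolding U using R nm by simp
      qed
      have pn: "0 \<le> (\<Prod>j\<in>R. gd (lam j) (w j))" using lam by (intro prod_nonneg gd_nonneg) auto
      show ?thesis unfolding g_def s pr using c0 nm pn
        by (auto simp: c_def ennreal_mult[symmetric] algebra_simps)
    qed
    have "(\<integral>\<^sup>+w. g (w(m := b, n := a)) \<partial>(Pi\<^sub>M R (\<lambda>_::'n. lborel))) = ennreal c * HN lam R (rho - a\<^sup>2 - b\<^sup>2)"
      unfolding eq HN_def by (rule nn_integral_cmult) (rule HN_meas[OF R(1)])
    also have "\<dots> = ennreal (c * Hr lam R (rho - a\<^sup>2 - b\<^sup>2))"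
      using HN_Hr[of lam, OF lam R(1)] c0 Hr_nonneg[of lam, OF lam, of R "rho - a\<^sup>2 - b\<^sup>2"] by (simp add: ennreal_mult)
    also have "\<dots> = ennreal ((a\<^sup>2)^p * (b\<^sup>2)^q * twoD.P (gd (lam n)) (gd (lam m)) (Hr lam R) rho a b)"
      by (simp add: c_def twoD.P_def[OF twoD_inst[of lam R n m, OF lam R(1)]] ac_simps)
    finally show "(\<integral>\<^sup>+w. g (w(m := b, n := a)) \<partial>(Pi\<^sub>M R (\<lambda>_::'n. lborel))) = ennreal ((a\<^sup>2)^p * (b\<^sup>2)^q * twoD.P (gd (lam n)) (gd (lam m)) (Hr lam R) rho a b)" .
  qed
  finally show ?thesis .
qed

lemma S_fin:
  fixes lam :: "'n \<Rightarrow> real"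
  assumes lam: "\<And>j. 0 < lam j" and R: "finite R" and rho: "0 < rho"
  shows "(\<integral>\<^sup>+a. \<integral>\<^sup>+b. ennreal ((a\<^sup>2)^p * (b\<^sup>2)^q * twoD.P (gd (lam n)) (gd (lam m)) (Hr lam R) rho a b) \<partial>lborel \<partial>lborel)
     \<le> ennreal (rho^p * rho^q)"
proof -
  note Pdef = twoD.P_def[OF twoD_inst[of lam R n m, OF lam R]]
  define c where "c = rho^p * rho^q"
  have c0: "0 \<le> c" using rho by (simp add: c_def)
  have pt: "(a\<^sup>2)^p * (b\<^sup>2)^q * twoD.P (gd (lam n)) (gd (lam m)) (Hr lam R) rho a b \<le> c * gd (lam n) a * gd (lam m) b" for a b :: real
  proof (cases "rho - a\<^sup>2 - b\<^sup>2 \<le> 0")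
    case True
    then show ?thesis unfolding Pdef using Hr_nonpos[of lam, OF lam True] c0 lam
      by (simp add: gd_nonneg)
  next
    case False
    have "0 \<le> a\<^sup>2" "0 \<le> b\<^sup>2" by simp_all
    then have ab: "a\<^sup>2 \<le> rho" "b\<^sup>2 \<le> rho" using False by linarith+
    have g0: "0 \<le> gd (lam n) a * gd (lam m) b" using lam by (simp add: gd_nonneg)
    have "(a\<^sup>2)^p * (b\<^sup>2)^q * (gd (lam n) a * gd (lam m) b * Hr lam R (rho - a\<^sup>2 - b\<^sup>2))
        \<le> c * (gd (lam n) a * gd (lam m) b * 1)"
      unfolding c_def using ab g0 Hr_le1[of lam, OF lam R] Hr_nonneg[of lam, OF lam] rho lam
      by (intro mult_mono power_mono mult_left_mono) (auto simp: gd_nonneg)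
    then show ?thesis unfolding Pdef by (simp add: ac_simps)
  qed
  have "(\<integral>\<^sup>+a. \<integral>\<^sup>+b. ennreal ((a\<^sup>2)^p * (b\<^sup>2)^q * twoD.P (gd (lam n)) (gd (lam m)) (Hr lam R) rho a b) \<partial>lborel \<partial>lborel)
     \<le> (\<integral>\<^sup>+a. \<integral>\<^sup>+b. ennreal c * ennreal (gd (lam n) a) * ennreal (gd (lam m) b) \<partial>lborel \<partial>lborel)"
    using c0 lam by (intro nn_integral_mono) (simp add: pt ennreal_mult[symmetric] gd_nonneg ennreal_leI)
  also have "\<dots> = (\<integral>\<^sup>+a. ennreal c * ennreal (gd (lam n) a) * (\<integral>\<^sup>+b. ennreal (gd (lam m) b) \<partial>lborel) \<partial>lborel)"
    by (intro nn_integral_cong nn_integral_cmult) simp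
  also have "\<dots> = (\<integral>\<^sup>+a. ennreal c * ennreal (gd (lam n) a) \<partial>lborel)"
    using lam by (simp add: gd_integral)
  also have "\<dots> = ennreal c * (\<integral>\<^sup>+a. ennreal (gd (lam n) a) \<partial>lborel)"
    by (rule nn_integral_cmult) simp
  also have "\<dots> = ennreal c" using lam by (simp add: gd_integral)
  finally show ?thesis unfolding c_def .
qed

theorem mainTheorem3:
  fixes M :: "'a measure" and X :: "'a \<Rightarrow> real ^ 'n"
    and lam :: "'n \<Rightarrow> real" and rho :: real and n m :: 'n
  assumes "prob_space M"
    and "CARD('n) \<ge> 2"
    and "rho > 0"
    and "\<And>i. lam i > 0"
    and "distributed M lborel X (\<lambda>x. ennreal (trunc_normal_density lam rho x))"
    and "n \<noteq> m"
  shows "cov M (\<lambda>\<omega>. (X \<omega> $ n)^2) (\<lambda>\<omega>. (X \<omega> $ m)^2) \<le> 0"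
proof -
  interpret prob_space M by (rule assms(1))
  note lam = assms(4)
  note dist = assms(5)
  define F where "F = trunc_normal_unnorm lam rho"
  define k where "k = trunc_normal_const lam rho"
  define R where "R = UNIV - {n, m}"
  have Rf: "finite R" by simp
  define poly where "poly p q x = ((x $ n)\<^sup>2) ^ p * ((x $ m)\<^sup>2) ^ q" for p q :: nat and x :: "real^'n"
  define PP where "PP = twoD.P (gd (lam n)) (gd (lam m)) (Hr lam R) rho"
  define S where "S p q = (\<integral>\<^sup>+a. \<integral>\<^sup>+b. ennreal ((a\<^sup>2)^p * (b\<^sup>2)^q * PP a b) \<partial>lborel \<partial>lborel)" for p q :: nat
  define s where "s p q = enn2real (S p q)" for p q
  have Fm[measurable]: "F \<in> borel_measurable borel" unfolding F_def by simp
  have Fn: "0 \<le> F x" for x unfolding F_def unnorm_gd using lam by (auto intro!: prod_nonneg gd_nonneg)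
  have polym[measurable]: "poly p q \<in> borel_measurable borel" for p q unfolding poly_def[abs_def] by measurable
  have polymL[measurable]: "poly p q \<in> borel_measurable lborel" for p q by simp
  have polyn: "0 \<le> poly p q x" for p q x unfolding poly_def by simp
  have U: "(\<integral>\<^sup>+x. ennreal (F x * poly p q x) \<partial>lborel) = S p q" for p q
    unfolding F_def poly_def S_def PP_def R_def using transfer[OF lam assms(6)] by simp
  have Sfin: "S p q = ennreal (s p q)" "0 \<le> s p q" for p q
  proof -
    have "S p q \<le> ennreal (rho^p * rho^q)" unfolding S_def PP_def by (rule S_fin[OF lam Rf assms(3)])
    then have "S p q \<noteq> \<top>" by (auto simp: top_unique)
    then show "S p q = ennreal (s p q)" "0 \<le> s p q" by (simp_all add: s_def ennreal_enn2real_if)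
  qed
  have intF: "(\<integral>x. F x * poly p q x \<partial>lborel) = s p q" for p q
    using U[of p q] Fn polyn by (subst integral_eq_nn_integral) (auto simp: s_def)
  have k: "k = 1 / s 0 0"
  proof -
    have "(\<integral>x. F x \<partial>lborel) = (\<integral>x. F x * poly 0 0 x \<partial>lborel)" by (simp add: poly_def)
    then show ?thesis unfolding k_def trunc_normal_const_def F_def[symmetric] by (simp add: intF)
  qed
  have k0: "0 \<le> k" using Sfin(2)[of 0 0] by (simp add: k)
  have dens: "trunc_normal_density lam rho x = k * F x" for x
    by (simp add: trunc_normal_density_def k_def F_def)
  have dn: "0 \<le> trunc_normal_density lam rho x" for x using k0 Fn by (simp add: dens)
  have E: "(\<integral>\<omega>. poly p q (X \<omega>) \<partial>M) = k * s p q" for p q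
  proof -
    have "(\<integral>\<omega>. poly p q (X \<omega>) \<partial>M) = (\<integral>x. trunc_normal_density lam rho x * poly p q x \<partial>lborel)"
      by (rule distributed_integral[OF dist polymL, symmetric]) (simp add: dn)
    also have "\<dots> = (\<integral>x. k * (F x * poly p q x) \<partial>lborel)" by (simp add: dens ac_simps)
    also have "\<dots> = k * s p q" by (simp add: intF)
    finally show ?thesis .
  qed
  have Int: "integrable M (\<lambda>\<omega>. poly p q (X \<omega>))" for p q
  proof -
    have "integrable lborel (\<lambda>x. trunc_normal_density lam rho x * poly p q x)"
    proof (rule integrableI_nonneg)
      show "(\<lambda>x. trunc_normal_density lam rho x * poly p q x) \<in> borel_measurable lborel"
        unfolding dens by measurable
      show "AE x in lborel. 0 \<le> trunc_normal_density lam rho x * poly p q x" using dn polyn by simp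
      have "(\<integral>\<^sup>+x. ennreal (trunc_normal_density lam rho x * poly p q x) \<partial>lborel) = (\<integral>\<^sup>+x. ennreal k * ennreal (F x * poly p q x) \<partial>lborel)"
        using k0 Fn polyn by (intro nn_integral_cong) (simp add: dens ennreal_mult ac_simps)
      also have "\<dots> = ennreal k * S p q" by (simp add: nn_integral_cmult U)
      finally show "(\<integral>\<^sup>+x. ennreal (trunc_normal_density lam rho x * poly p q x) \<partial>lborel) < \<infinity>"
        by (simp add: Sfin ennreal_mult_less_top)
    qed
    then show ?thesis using distributed_integrable[OF dist polymL] dn by simp
  qed
  have ks: "k * s 0 0 = 1"
  proof -
    have "(\<integral>\<omega>. poly 0 0 (X \<omega>) \<partial>M) = 1" by (simp add: poly_def prob_space)
    then show ?thesis using E[of 0 0] by simp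
  qed
  have main: "s 1 1 * s 0 0 \<le> s 1 0 * s 0 1"
  proof -
    have "S 1 1 * S 0 0 \<le> S 1 0 * S 0 1"
      using twoD.main2D[OF twoD_inst[of lam R n m, OF lam Rf], of rho] unfolding S_def PP_def by simp
    then show ?thesis using Sfin by (simp add: ennreal_mult[symmetric] ennreal_le_iff)
  qed
  have Y: "(\<lambda>\<omega>. (X \<omega> $ n)^2) = (\<lambda>\<omega>. poly 1 0 (X \<omega>))" by (simp add: poly_def)
  have Z: "(\<lambda>\<omega>. (X \<omega> $ m)^2) = (\<lambda>\<omega>. poly 0 1 (X \<omega>))" by (simp add: poly_def)
  have YZ: "poly 1 0 x * poly 0 1 x = poly 1 1 x" for x by (simp add: poly_def)
  define a where "a = k * s 1 0"
  define b where "b = k * s 0 1"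
  have "cov M (\<lambda>\<omega>. (X \<omega> $ n)^2) (\<lambda>\<omega>. (X \<omega> $ m)^2)
      = (\<integral>\<omega>. (poly 1 0 (X \<omega>) - a) * (poly 0 1 (X \<omega>) - b) \<partial>M)"
    unfolding cov_def Y Z E a_def b_def ..
  also have "\<dots> = (\<integral>\<omega>. poly 1 1 (X \<omega>) - (b * poly 1 0 (X \<omega>) + a * poly 0 1 (X \<omega>)) + a * b \<partial>M)"
    by (intro Bochner_Integration.integral_cong) (auto simp: poly_def algebra_simps)
  also have "\<dots> = k * s 1 1 - (b * (k * s 1 0) + a * (k * s 0 1)) + a * b"
    using Int by (simp add: E prob_space)
  also have "\<dots> = k * k * (s 0 0 * s 1 1 - s 1 0 * s 0 1)"
  proof -
    have "k * s 1 1 = k * (k * s 0 0) * s 1 1" using ks by simp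
    then show ?thesis by (simp add: a_def b_def algebra_simps)
  qed
  also have "\<dots> \<le> 0" using main by (intro mult_nonneg_nonpos) (auto simp: ac_simps)
  finally show ?thesis .
qed

end
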